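(* Under $A_0$ and $A_1'$, with high frequency sampling and $h_n=c\,n^{-1/(d+2)}$ for some $0<c<\infty$: - if $\gamma_0<1$ and $\delta_n=d_1h_n^d$ with $0<d_1<\infty$, then $\mathrm{MISE}(\hat f_n^H)=O(T_n^{-1})$; - if $\gamma_0=1$ and $\delta_n=d_2h_n^d\ln(h_n^{-d})$ with $0<d_2<\infty$, then $\mathrm{MISE}(\hat f_n^H)=O(T_n^{-1}\ln T_n)$; - if $\gamma_0>1$ and $\delta_n=d_3h_n^{d/\gamma_0}$ with $0<d_3<\infty$, then $\mathrm{MISE}(\hat f_n^H)=O\big(T_n^{-2\gamma_0/(2\gamma_0+d(\gamma_0-1))}\big)$. Here $T_n=n\delta_n$.
   Context: Let $\{X_t,t\in\mathbb R\}$ be a measurable $\mathbb R^d$-valued process ($d\ge1$). Every $X_t$ has Lebesgue density $f$. For all $s\ne t$ the pair $(X_s,X_t)$ has a joint density $f_{(X_s,X_t)}=f_{(X_0,X_{|t-s|})}=:f_{|t-s|}$. For $u>0$ put $g_u(y,z):=f_u(y,z)-f(y)f(z)$. High frequency sampling: $t_k=k\delta_n$ for $0\le k\le n$, with $\delta_n\to0$ and $T_n:=n\delta_n\to\infty$. Histogram. Let $\Pi_n=\{\pi_{nj},j\in\mathbb Z^d\}$ be the partition of $\mathbb R^d$ into half-open hypercubes of side $h_n$. Set $\hat f_n^H(x)=\frac{1}{nh_n^d}\sum_{k=1}^n\mathbf 1_{\pi_{nj}}(X_{t_k})$ for $x\in\pi_{nj}$. $\mathrm{MISE}(\hat f_n)=\mathrm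 E\int(\hat f_n-f)^2$. Assumptions. - $A_0$: (i) $f\in\mathcal C^2(\mathbb R^d)$ with all partial derivatives square Riemann-integrable; (ii) $f$ continuous and bounded. - $A_1'(i)$: there exist $\gamma_0>0$, $u_0>0$ and a positive, continuous, integrable $\varphi$ with $\sup_zf_u(y,z)\le\varphi(y)u^{-\gamma_0}$ for all $y$ and all $0<u\le u_0$. - $A_1'(ii)$: there exist a positive, continuous, integrable $k$ and a bounded, ultimately decreasing $\pi$ with $\int_{u_1}^\infty\pi<\infty$ for some $u_1>u_0$, such that $\sup_z|g_u(y,z)|\le k(y)\pi(u)$ for all $y$ and all $u\ge u_0$. *)

theory Defs
  imports "HOL-Probability.Probability"
begin

definition hcube :: "real \<Rightarrow> int ^ 'd \<Rightarrow> (real ^ 'd::finite) set" where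
  "hcube h j = {x. \<forall>i. real_of_int (j $ i) * h \<le> x $ i \<and> x $ i < (real_of_int (j $ i) + 1) * h}"

definition cell_index :: "real \<Rightarrow> real ^ 'd::finite \<Rightarrow> int ^ 'd" where
  "cell_index h x = (\<chi> i. \<lfloor>x $ i / h\<rfloor>)"

definition hist_est :: "(real \<Rightarrow> 'a \<Rightarrow> real ^ 'd::finite) \<Rightarrow> real \<Rightarrow> real \<Rightarrow> nat \<Rightarrow> 'a \<Rightarrow> real ^ 'd \<Rightarrow> real" where
  "hist_est X \<delta> h n \<omega> x =
     (1 / (real n * h ^ CARD('d))) * (\<Sum>k=1..n. indicator (hcube h (cell_index h x)) (X (real k * \<delta>) \<omega>))"

definition MISE :: "'a measure \<Rightarrow> (real \<Rightarrow> 'a \<Rightarrow> real ^ 'd::finite) \<Rightarrow> (real ^ 'd \<Rightarrow> real) \<Rightarrow> real \<Rightarrow> real \<Rightarrow> nat \<Rightarrow> ennreal" where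
  "MISE M X f \<delta> h n =
     (\<integral>\<^sup>+ \<omega>. (\<integral>\<^sup>+ x. ennreal ((hist_est X \<delta> h n \<omega> x - f x)\<^sup>2) \<partial>lborel) \<partial>M)"

end

theory Submission
  imports Defs
begin

lemma floor_iff_interval:
  assumes "0 < h"
  shows "(real_of_int j * h \<le> y \<and> y < (real_of_int j + 1) * h) \<longleftrightarrow> \<lfloor>y / h\<rfloor> = j"
proof -
  have "(real_of_int j * h \<le> y) \<longleftrightarrow> real_of_int j \<le> y / h" using assms by (simp add: le_divide_eq)
  moreover have "(y < (real_of_int j + 1) * h) \<longleftrightarrow> y / h < real_of_int j + 1" using assms by (simp add: divide_less_eq)
  ultimately show ?thesis by (simp add: floor_eq_iff)
qed

lemma mem_hcube_iff:
  fixes y :: "real ^ 'd::finite"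
  assumes "0 < h"
  shows "y \<in> hcube h j \<longleftrightarrow> cell_index h y = j"
  using floor_iff_interval[OF assms]
  by (auto simp: hcube_def cell_index_def vec_eq_iff)

lemma mem_hcube_cell:
  fixes x y :: "real ^ 'd::finite"
  assumes "0 < h"
  shows "y \<in> hcube h (cell_index h x) \<longleftrightarrow> cell_index h y = cell_index h x"
  using mem_hcube_iff[OF assms] .

lemma hcube_sets[measurable]:
  "hcube h j \<in> sets (borel :: (real ^ 'd::finite) measure)"
  unfolding hcube_def by measurable

lemma emeasure_hcube:
  fixes j :: "int ^ 'd::finite"
  assumes h: "0 < h"
  shows "emeasure lborel (hcube h j) = ennreal (h ^ CARD('d))"
proof -
  define a :: "real ^ 'd" where "a = (\<chi> i. real_of_int (j $ i) * h)"
  define b :: "real ^ 'd" where "b = (\<chi> i. (real_of_int (j $ i) + 1) * h)"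
  have ab: "\<And>i. a $ i \<le> b $ i" using h by (simp add: a_def b_def distrib_right)
  have sub1: "box a b \<subseteq> hcube h j" by (auto simp: mem_box_cart hcube_def a_def b_def less_imp_le)
  have sub2: "hcube h j \<subseteq> cbox a b" by (auto simp: mem_box_cart hcube_def a_def b_def less_imp_le)
  have "a \<in> cbox a b" using ab by (simp add: mem_box_cart)
  hence ne: "cbox a b \<noteq> {}" by blast
  have "measure lborel (cbox a b) = h ^ CARD('d)"
    using content_cbox_cart[OF ne] by (simp add: a_def b_def algebra_simps)
  then have c: "emeasure lborel (cbox a b) = ennreal (h ^ CARD('d))"
  proof -
    have "emeasure lborel (cbox a b) \<noteq> \<top>" using emeasure_lborel_cbox_finite[of a b] by simp
    thus ?thesis using emeasure_eq_ennreal_measure \<open>measure lborel (cbox a b) = h ^ CARD('d)\<close> by metis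
  qed
  have "emeasure lborel (box a b) = emeasure lborel (cbox a b)"
    by (simp add: emeasure_lborel_box_eq emeasure_lborel_cbox_eq)
  hence "emeasure lborel (box a b) = ennreal (h ^ CARD('d))" using c by simp
  hence "ennreal (h ^ CARD('d)) \<le> emeasure lborel (hcube h j)"
    using emeasure_mono[OF sub1] by (metis hcube_sets sets_lborel)
  moreover have "emeasure lborel (hcube h j) \<le> ennreal (h ^ CARD('d))"
    using emeasure_mono[OF sub2, of lborel] c by simp
  ultimately show ?thesis by (rule antisym[rotated])
qed

lemma cell_eq_iff: "cell_index h y = cell_index h x \<longleftrightarrow> (\<forall>i. \<lfloor>y $ i / h\<rfloor> = \<lfloor>x $ i / h\<rfloor>)"
  by (simp add: cell_index_def vec_eq_iff)

lemma measurable_nth_comp[measurable (raw)]: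
  "f \<in> borel_measurable M \<Longrightarrow> (\<lambda>x. (f x :: real ^ 'd::finite) $ i) \<in> borel_measurable M"
  using measurable_compose[OF _ borel_measurable_nth] by blast

lemma measurable_floor_comp[measurable (raw)]:
  "f \<in> borel_measurable M \<Longrightarrow> (\<lambda>x. \<lfloor>f x :: real\<rfloor>) \<in> M \<rightarrow>\<^sub>M count_space UNIV"
  using measurable_compose[OF _ measurable_real_floor] by blast

lemma pred_same_cell[measurable]:
  fixes h :: real and f g :: "'a \<Rightarrow> real ^ 'd::finite"
  assumes [measurable]: "f \<in> borel_measurable M" "g \<in> borel_measurable M"
  shows "Measurable.pred M (\<lambda>w. cell_index h (f w) = cell_index h (g w))"
  unfolding cell_eq_iff by measurable

lemma indicator_cell:
  fixes x y :: "real ^ 'd::finite"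
  assumes "0 < h"
  shows "indicator (hcube h (cell_index h x)) y = (if cell_index h y = cell_index h x then 1 else 0)"
  by (simp add: indicator_def mem_hcube_cell[OF assms])

lemma cell_partition:
  fixes \<psi> :: "real ^ 'd::finite \<Rightarrow> ennreal"
  assumes h: "0 < h" and [measurable]: "\<psi> \<in> borel_measurable borel"
  shows "(\<integral>\<^sup>+ x. \<integral>\<^sup>+ y. indicator (hcube h (cell_index h x)) y * \<psi> y \<partial>lborel \<partial>lborel)
         = ennreal (h ^ CARD('d)) * (\<integral>\<^sup>+ y. \<psi> y \<partial>lborel)"
proof -
  have "(\<integral>\<^sup>+ x. \<integral>\<^sup>+ y. indicator (hcube h (cell_index h x)) y * \<psi> y \<partial>lborel \<partial>lborel)
      = (\<integral>\<^sup>+ x. \<integral>\<^sup>+ y. (if cell_index h y = cell_index h x then 1 else 0) * \<psi> y \<partial>lborel \<partial>lborel)"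
    by (simp add: indicator_cell[OF h])
  also have "\<dots> = (\<integral>\<^sup>+ y. \<integral>\<^sup>+ x. (if cell_index h y = cell_index h x then 1 else 0) * \<psi> y \<partial>lborel \<partial>lborel)"
    by (rule lborel_pair.Fubini'[symmetric]) measurable
  also have "\<dots> = (\<integral>\<^sup>+ y. \<psi> y * (\<integral>\<^sup>+ x. indicator (hcube h (cell_index h y)) x \<partial>lborel) \<partial>lborel)"
  proof (rule nn_integral_cong)
    fix y :: "real ^ 'd"
    have "\<And>x. (if cell_index h y = cell_index h x then 1 else 0) * \<psi> y
           = \<psi> y * indicator (hcube h (cell_index h y)) x"
      by (simp add: indicator_def mem_hcube_cell[OF h] eq_commute)
    thus "(\<integral>\<^sup>+ x. (if cell_index h y = cell_index h x then 1 else 0) * \<psi> y \<partial>lborel)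
        = \<psi> y * (\<integral>\<^sup>+ x. indicator (hcube h (cell_index h y)) x \<partial>lborel)"
      by (simp add: nn_integral_cmult)
  qed
  also have "\<dots> = (\<integral>\<^sup>+ y. \<psi> y * ennreal (h ^ CARD('d)) \<partial>lborel)"
    by (simp add: emeasure_hcube[OF h])
  finally show ?thesis by (simp add: nn_integral_multc mult.commute)
qed

lemma indicator_sum_moment:
  fixes Y :: "nat \<Rightarrow> 'a \<Rightarrow> 'b" and A :: "'b set"
  assumes P: "prob_space M"
    and Ym[measurable]: "\<And>k. Y k \<in> measurable M N" and A[measurable]: "A \<in> sets N"
    and pk: "\<And>k. k \<in> {1..n} \<Longrightarrow> measure M {\<omega>\<in>space M. Y k \<omega> \<in> A} = p"
    and pkl: "\<And>k l. k \<in> {1..n} \<Longrightarrow> l \<in> {1..n} \<Longrightarrow> k \<noteq> l \<Longrightarrow>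
        measure M {\<omega>\<in>space M. Y k \<omega> \<in> A \<and> Y l \<omega> \<in> A} \<le> p\<^sup>2 + b k l"
    and c: "0 \<le> c"
  shows "(\<integral>\<^sup>+ \<omega>. ennreal ((c * (\<Sum>k=1..n. indicator A (Y k \<omega>)) - v)\<^sup>2) \<partial>M)
     \<le> ennreal ((c * real n * p - v)\<^sup>2 + c\<^sup>2 * real n * p + c\<^sup>2 * (\<Sum>k\<in>{1..n}. \<Sum>l\<in>{1..n}-{k}. b k l))"
proof -
  interpret prob_space M by (rule P)
  define I where "I k \<omega> = (indicator A (Y k \<omega>) :: real)" for k \<omega>
  have Im[measurable]: "I k \<in> borel_measurable M" for k unfolding I_def by measurable
  have Iint: "integrable M (\<lambda>\<omega>. I k \<omega> * I l \<omega>)" for k l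
    by (rule integrable_const_bound[where B=1]) (auto simp: I_def indicator_def)
  have Iint1: "integrable M (I k)" for k
    by (rule integrable_const_bound[where B=1]) (auto simp: I_def indicator_def)
  have EI: "expectation (I k) = measure M {\<omega>\<in>space M. Y k \<omega> \<in> A}" for k
  proof -
    have "expectation (I k) = expectation (indicator {\<omega>\<in>space M. Y k \<omega> \<in> A})"
      by (rule Bochner_Integration.integral_cong) (auto simp: I_def indicator_def)
    also have "\<dots> = measure M {\<omega>\<in>space M. Y k \<omega> \<in> A}" by simp
    finally show ?thesis .
  qed
  have EII: "expectation (\<lambda>\<omega>. I k \<omega> * I l \<omega>) = measure M {\<omega>\<in>space M. Y k \<omega> \<in> A \<and> Y l \<omega> \<in> A}" for k l
  proof -
    have "expectation (\<lambda>\<omega>. I k \<omega> * I l \<omega>) = expectation (indicator {\<omega>\<in>space M. Y k \<omega> \<in> A \<and> Y l \<omega> \<in> A})"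
      by (rule Bochner_Integration.integral_cong) (auto simp: I_def indicator_def)
    also have "\<dots> = measure M {\<omega>\<in>space M. Y k \<omega> \<in> A \<and> Y l \<omega> \<in> A}" by simp
    finally show ?thesis .
  qed
  define S where "S \<omega> = (\<Sum>k=1..n. I k \<omega>)" for \<omega>
  have Sint: "integrable M S" unfolding S_def using Iint1 by auto
  have SSeq: "S \<omega> * S \<omega> = (\<Sum>k=1..n. \<Sum>l=1..n. I k \<omega> * I l \<omega>)" for \<omega>
    unfolding S_def by (simp add: sum_product)
  have SSint: "integrable M (\<lambda>\<omega>. S \<omega> * S \<omega>)" unfolding SSeq using Iint by auto
  have ES: "expectation S = real n * p"
    unfolding S_def using Iint1 pk by (simp add: EI)
  have ESS: "expectation (\<lambda>\<omega>. S \<omega> * S \<omega>) \<le> real n * p + real n * real n * p\<^sup>2 + (\<Sum>k\<in>{1..n}. \<Sum>l\<in>{1..n}-{k}. b k l)"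
  proof -
    have "expectation (\<lambda>\<omega>. S \<omega> * S \<omega>) = (\<Sum>k=1..n. \<Sum>l=1..n. measure M {\<omega>\<in>space M. Y k \<omega> \<in> A \<and> Y l \<omega> \<in> A})"
      unfolding SSeq using Iint by (simp add: EII)
    also have "\<dots> = (\<Sum>k=1..n. p + (\<Sum>l\<in>{1..n}-{k}. measure M {\<omega>\<in>space M. Y k \<omega> \<in> A \<and> Y l \<omega> \<in> A}))"
    proof (rule sum.cong[OF refl])
      fix k assume k: "k \<in> {1..n}"
      have "(\<Sum>l=1..n. measure M {\<omega>\<in>space M. Y k \<omega> \<in> A \<and> Y l \<omega> \<in> A})
         = measure M {\<omega>\<in>space M. Y k \<omega> \<in> A \<and> Y k \<omega> \<in> A} + (\<Sum>l\<in>{1..n}-{k}. measure M {\<omega>\<in>space M. Y k \<omega> \<in> A \<and> Y l \<omega> \<in> A})"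
        using k by (simp add: sum.remove)
      thus "(\<Sum>l=1..n. measure M {\<omega>\<in>space M. Y k \<omega> \<in> A \<and> Y l \<omega> \<in> A})
         = p + (\<Sum>l\<in>{1..n}-{k}. measure M {\<omega>\<in>space M. Y k \<omega> \<in> A \<and> Y l \<omega> \<in> A})"
        using pk[OF k] by simp
    qed
    also have "\<dots> \<le> (\<Sum>k=1..n. p + (\<Sum>l\<in>{1..n}-{k}. p\<^sup>2 + b k l))"
      by (intro sum_mono add_left_mono) (auto intro!: pkl)
    also have "\<dots> = real n * p + (\<Sum>k=1..n. real (n - 1) * p\<^sup>2) + (\<Sum>k\<in>{1..n}. \<Sum>l\<in>{1..n}-{k}. b k l)"
      by (simp add: sum.distrib card_Diff_singleton)
    also have "\<dots> \<le> real n * p + real n * real n * p\<^sup>2 + (\<Sum>k\<in>{1..n}. \<Sum>l\<in>{1..n}-{k}. b k l)"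
    proof -
      have "0 \<le> real n * p\<^sup>2" by simp
      thus ?thesis by (simp add: algebra_simps of_nat_diff)
    qed
    finally show ?thesis .
  qed
  have eq: "(c * S \<omega> - v)\<^sup>2 = c\<^sup>2 * (S \<omega> * S \<omega>) - 2 * c * v * S \<omega> + v\<^sup>2" for \<omega>
    by (simp add: power2_eq_square algebra_simps)
  have int2: "integrable M (\<lambda>\<omega>. (c * S \<omega> - v)\<^sup>2)"
    unfolding eq using SSint Sint by auto
  have "(\<integral>\<^sup>+ \<omega>. ennreal ((c * (\<Sum>k=1..n. indicator A (Y k \<omega>)) - v)\<^sup>2) \<partial>M)
      = (\<integral>\<^sup>+ \<omega>. ennreal ((c * S \<omega> - v)\<^sup>2) \<partial>M)"
    by (simp add: S_def I_def)
  also have "\<dots> = ennreal (expectation (\<lambda>\<omega>. (c * S \<omega> - v)\<^sup>2))"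
    by (rule nn_integral_eq_integral[OF int2]) simp
  also have "expectation (\<lambda>\<omega>. (c * S \<omega> - v)\<^sup>2) = c\<^sup>2 * expectation (\<lambda>\<omega>. S \<omega> * S \<omega>) - 2 * c * v * expectation S + v\<^sup>2"
    unfolding eq using SSint Sint by (simp add: prob_space)
  also have "\<dots> \<le> c\<^sup>2 * (real n * p + real n * real n * p\<^sup>2 + (\<Sum>k\<in>{1..n}. \<Sum>l\<in>{1..n}-{k}. b k l)) - 2 * c * v * (real n * p) + v\<^sup>2"
    unfolding ES by (intro add_right_mono diff_right_mono mult_left_mono ESS) simp
  also have "\<dots> = (c * real n * p - v)\<^sup>2 + c\<^sup>2 * real n * p + c\<^sup>2 * (\<Sum>k\<in>{1..n}. \<Sum>l\<in>{1..n}-{k}. b k l)"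
    by (simp add: power2_eq_square algebra_simps)
  finally show ?thesis by (simp add: ennreal_leI)
qed

lemma psum_step:
  fixes g x :: real
  assumes g: "0 < g" "g \<noteq> 1" and x: "1 \<le> x"
  shows "(x + 1) powr (- g) \<le> ((x + 1) powr (1 - g) - x powr (1 - g)) / (1 - g)"
proof -
  have "\<exists>z>x. z < x + 1 \<and> (\<lambda>y. y powr (1 - g) / (1 - g)) (x + 1) - (\<lambda>y. y powr (1 - g) / (1 - g)) x
        = (x + 1 - x) * z powr (- g)"
  proof (rule MVT2)
    fix y assume "x \<le> y" "y \<le> x + 1"
    hence y: "0 < y" using x by simp
    have "((\<lambda>y. y powr (1 - g)) has_real_derivative (1 - g) * y powr (1 - g - 1)) (at y)"
      by (rule has_real_derivative_powr[OF y])
    hence "((\<lambda>y. y powr (1 - g) / (1 - g)) has_real_derivative (1 - g) * y powr (1 - g - 1) / (1 - g)) (at y)"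
      by (rule DERIV_cdivide)
    thus "((\<lambda>y. y powr (1 - g) / (1 - g)) has_real_derivative y powr (- g)) (at y)"
      using g by simp
  qed simp
  then obtain z where z: "x < z" "z < x + 1" and eq: "(x + 1) powr (1 - g) / (1 - g) - x powr (1 - g) / (1 - g) = z powr (- g)"
    by auto
  have "(x + 1) powr (- g) \<le> z powr (- g)"
    by (rule powr_mono2') (use g x z in auto)
  also have "\<dots> = ((x + 1) powr (1 - g) - x powr (1 - g)) / (1 - g)" using eq by (simp add: diff_divide_distrib)
  finally show ?thesis .
qed

lemma psum_bound:
  fixes g :: real
  assumes g: "0 < g" "g \<noteq> 1" and N: "1 \<le> N"
  shows "(\<Sum>m=1..N. real m powr (- g)) \<le> 1 + (real N powr (1 - g) - 1) / (1 - g)"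
  using N
proof (induction N rule: dec_induct)
  case base thus ?case by simp
next
  case (step N)
  have "(\<Sum>m=1..Suc N. real m powr (- g)) = (\<Sum>m=1..N. real m powr (- g)) + (real N + 1) powr (- g)"
    by (simp add: add.commute)
  also have "\<dots> \<le> 1 + (real N powr (1 - g) - 1) / (1 - g) + ((real N + 1) powr (1 - g) - real N powr (1 - g)) / (1 - g)"
    using step.IH psum_step[OF g, of "real N"] step.hyps by simp
  also have "\<dots> = 1 + (real (Suc N) powr (1 - g) - 1) / (1 - g)"
    by (simp add: diff_divide_distrib add_ac)
  finally show ?case .
qed

lemma lnsum_step:
  fixes x :: real
  assumes x: "1 \<le> x"
  shows "1 / (x + 1) \<le> ln (x + 1) - ln x"
proof -
  have "\<exists>z>x. z < x + 1 \<and> ln (x + 1) - ln x = (x + 1 - x) * (1 / z)"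
  proof (rule MVT2)
    fix y assume "x \<le> y" "y \<le> x + 1"
    hence y: "0 < y" using x by simp
    show "(ln has_real_derivative 1 / y) (at y)" using DERIV_ln[OF y] by (simp add: divide_inverse)
  qed simp
  then obtain z where z: "x < z" "z < x + 1" and eq: "ln (x + 1) - ln x = 1 / z" by auto
  have "1 / (x + 1) \<le> 1 / z" using z x by (intro divide_left_mono) auto
  thus ?thesis using eq by simp
qed

lemma lnsum_bound:
  assumes N: "1 \<le> N"
  shows "(\<Sum>m=1..N. 1 / real m) \<le> 1 + ln (real N)"
  using N
proof (induction N rule: dec_induct)
  case base thus ?case by simp
next
  case (step N)
  have "(\<Sum>m=1..Suc N. 1 / real m) = (\<Sum>m=1..N. 1 / real m) + 1 / (real N + 1)" by simp
  also have "\<dots> \<le> 1 + ln (real N) + (ln (real N + 1) - ln (real N))"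
    using step.IH lnsum_step[of "real N"] step.hyps by simp
  also have "\<dots> = 1 + ln (real (Suc N))" by (simp add: add_ac)
  finally show ?case .
qed

lemma card_le_real:
  fixes c :: real assumes "0 \<le> c"
  shows "real (card {m\<in>{1..n::nat}. real m \<le> c}) \<le> c"
proof -
  have "{m\<in>{1..n::nat}. real m \<le> c} \<subseteq> {1..nat \<lfloor>c\<rfloor>}"
    using assms by (auto simp: le_nat_floor)
  hence "card {m\<in>{1..n::nat}. real m \<le> c} \<le> card {1..nat \<lfloor>c\<rfloor>}" by (intro card_mono) auto
  hence "real (card {m\<in>{1..n::nat}. real m \<le> c}) \<le> real (nat \<lfloor>c\<rfloor>)" by simp
  also have "\<dots> \<le> c" using assms by linarith
  finally show ?thesis .
qed

lemma indicator_intervals_le1: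
  fixes \<delta> s :: real assumes d: "0 < \<delta>" and S1: "\<And>m. m \<in> S \<Longrightarrow> 1 \<le> m"
  shows "(\<Sum>m\<in>S. indicator {(real m - 1) * \<delta> ..< real m * \<delta>} s) \<le> (1::ennreal)"
proof (cases "finite S")
  case True
  have eq: "(\<Sum>m\<in>S. indicator {(real m - 1) * \<delta> ..< real m * \<delta>} s) = (\<Sum>m\<in>S \<inter> {m. s \<in> {(real m - 1) * \<delta> ..< real m * \<delta>}}. (1::ennreal))"
    using True by (simp add: indicator_def sum.If_cases)
  have sub: "S \<inter> {m. s \<in> {(real m - 1) * \<delta> ..< real m * \<delta>}} \<subseteq> {nat \<lfloor>s / \<delta>\<rfloor> + 1}"
  proof
    fix m assume "m \<in> S \<inter> {m. s \<in> {(real m - 1) * \<delta> ..< real m * \<delta>}}"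
    hence m: "(real m - 1) * \<delta> \<le> s" "s < real m * \<delta>" by auto
    have "real m - 1 \<le> s / \<delta>" using m d by (simp add: le_divide_eq)
    moreover have "s / \<delta> < real m" using m d by (simp add: divide_less_eq)
    ultimately have "\<lfloor>s / \<delta>\<rfloor> = int m - 1" by (simp add: floor_eq_iff)
    moreover have "m \<ge> 1" using S1 \<open>m \<in> S \<inter> _\<close> by blast
    ultimately show "m \<in> {nat \<lfloor>s / \<delta>\<rfloor> + 1}" by simp
  qed
  have "card (S \<inter> {m. s \<in> {(real m - 1) * \<delta> ..< real m * \<delta>}}) \<le> 1"
    using card_mono[OF _ sub] by simp
  thus ?thesis unfolding eq by simp
qed simp

lemma pi_tail_sum:
  fixes \<pi> :: "real \<Rightarrow> real" and \<delta> W :: real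
  assumes d: "0 < \<delta>" and mono: "\<And>a b. W \<le> a \<Longrightarrow> a \<le> b \<Longrightarrow> \<pi> b \<le> \<pi> a"
    and pos: "\<And>s. W \<le> s \<Longrightarrow> 0 \<le> \<pi> s"
    and Gi: "integrable lborel (\<lambda>s. indicator {W..} s * \<pi> s)"
  shows "\<delta> * (\<Sum>m\<in>{m\<in>{1..n::nat}. W + \<delta> < real m * \<delta>}. \<pi> (real m * \<delta>)) \<le> (\<integral> s. indicator {W..} s * \<pi> s \<partial>lborel)"
proof -
  define G where "G s = indicator {W..} s * \<pi> s" for s
  have Gm[measurable]: "G \<in> borel_measurable borel" using borel_measurable_integrable[OF Gi] by (simp add: G_def[abs_def])
  have G0: "0 \<le> G s" for s using pos by (simp add: G_def indicator_def)
  define S where "S = {m\<in>{1..n::nat}. W + \<delta> < real m * \<delta>}"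
  define I where "I m = {(real m - 1) * \<delta> ..< real m * \<delta>}" for m :: nat
  have one: "ennreal (\<delta> * \<pi> (real m * \<delta>)) \<le> (\<integral>\<^sup>+ s. ennreal (G s) * indicator (I m) s \<partial>lborel)" if m: "m \<in> S" for m
  proof -
    have W: "W \<le> (real m - 1) * \<delta>" using m by (simp add: S_def algebra_simps)
    have "ennreal (\<delta> * \<pi> (real m * \<delta>)) = (\<integral>\<^sup>+ s. ennreal (\<pi> (real m * \<delta>)) * indicator (I m) s \<partial>lborel)"
      using d W pos[of "real m * \<delta>"] by (simp add: I_def nn_integral_cmult_indicator ennreal_mult' algebra_simps mult.commute)
    also have "\<dots> \<le> (\<integral>\<^sup>+ s. ennreal (G s) * indicator (I m) s \<partial>lborel)"
    proof (rule nn_integral_mono)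
      fix s show "ennreal (\<pi> (real m * \<delta>)) * indicator (I m) s \<le> ennreal (G s) * indicator (I m) s"
      proof (cases "s \<in> I m")
        case True
        hence "W \<le> s" "s \<le> real m * \<delta>" using W by (auto simp: I_def)
        thus ?thesis using True mono[of s "real m * \<delta>"] by (simp add: G_def ennreal_leI)
      qed simp
    qed
    finally show ?thesis .
  qed
  have "ennreal (\<delta> * (\<Sum>m\<in>S. \<pi> (real m * \<delta>))) = (\<Sum>m\<in>S. ennreal (\<delta> * \<pi> (real m * \<delta>)))"
  proof -
    have "\<And>m. m \<in> S \<Longrightarrow> 0 \<le> \<delta> * \<pi> (real m * \<delta>)"
      using d pos by (auto simp: S_def intro!: mult_nonneg_nonneg)
    thus ?thesis by (simp add: sum_distrib_left sum_ennreal)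
  qed
  also have "\<dots> \<le> (\<Sum>m\<in>S. \<integral>\<^sup>+ s. ennreal (G s) * indicator (I m) s \<partial>lborel)"
    by (rule sum_mono) (rule one)
  also have "\<dots> = (\<integral>\<^sup>+ s. (\<Sum>m\<in>S. ennreal (G s) * indicator (I m) s) \<partial>lborel)"
    by (rule nn_integral_sum[symmetric]) (simp add: I_def)
  also have "\<dots> \<le> (\<integral>\<^sup>+ s. ennreal (G s) \<partial>lborel)"
  proof (rule nn_integral_mono)
    fix s
    have "(\<Sum>m\<in>S. ennreal (G s) * indicator (I m) s) = ennreal (G s) * (\<Sum>m\<in>S. indicator (I m) s)"
      by (simp add: sum_distrib_left)
    also have "\<dots> \<le> ennreal (G s) * 1"
      by (intro mult_left_mono) (auto simp: I_def S_def intro!: indicator_intervals_le1[OF d])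
    finally show "(\<Sum>m\<in>S. ennreal (G s) * indicator (I m) s) \<le> ennreal (G s)" by simp
  qed
  also have "\<dots> = ennreal (\<integral> s. G s \<partial>lborel)"
    by (rule nn_integral_eq_integral) (use Gi G0 in \<open>auto simp: G_def\<close>)
  finally have "ennreal (\<delta> * (\<Sum>m\<in>S. \<pi> (real m * \<delta>))) \<le> ennreal (\<integral> s. G s \<partial>lborel)" .
  moreover have "0 \<le> (\<integral> s. G s \<partial>lborel)" by (rule integral_nonneg_AE) (simp add: G0)
  ultimately show ?thesis by (simp add: S_def G_def)
qed

lemma seg_bound:
  fixes f :: "real ^ 'd::finite \<Rightarrow> real" and Df :: "'d \<Rightarrow> real ^ 'd \<Rightarrow> real"
  assumes deriv: "\<And>x. (f has_derivative (\<lambda>v. \<Sum>i\<in>UNIV. Df i x * v $ i)) (at x)"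
    and cont: "\<And>i. continuous_on UNIV (Df i)"
  shows "ennreal ((f y - f x)\<^sup>2) \<le> ennreal (\<Sum>i\<in>UNIV. (y $ i - x $ i)\<^sup>2) *
     (\<integral>\<^sup>+ s. indicator {0..1} s * ennreal (\<Sum>i\<in>UNIV. (Df i (x + s *\<^sub>R (y - x)))\<^sup>2) \<partial>lborel)"
proof -
  define g' where "g' s = (\<Sum>i\<in>UNIV. Df i (x + s *\<^sub>R (y - x)) * (y $ i - x $ i))" for s
  define G where "G s = (\<Sum>i\<in>UNIV. (Df i (x + s *\<^sub>R (y - x)))\<^sup>2)" for s
  define Q where "Q = (\<Sum>i\<in>UNIV. (y $ i - x $ i)\<^sup>2)"
  have ci: "continuous_on UNIV (\<lambda>s. Df i (x + s *\<^sub>R (y - x)))" for i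
    by (rule continuous_on_compose2[OF cont[of i]]) (intro continuous_intros, auto)
  have contg: "continuous_on UNIV g'" unfolding g'_def
    by (intro continuous_intros ci)
  have contG: "continuous_on UNIV G" unfolding G_def
    by (intro continuous_intros ci)
  have der: "((\<lambda>s. f (x + s *\<^sub>R (y - x))) has_vector_derivative g' s) (at s within {0..1})" for s
  proof -
    have l: "((\<lambda>s. x + s *\<^sub>R (y - x)) has_derivative (\<lambda>s. s *\<^sub>R (y - x))) (at s within {0..1})"
      by (auto intro!: derivative_eq_intros)
    have "((\<lambda>s. f (x + s *\<^sub>R (y - x))) has_derivative (\<lambda>v. \<Sum>i\<in>UNIV. Df i (x + s *\<^sub>R (y - x)) * (v *\<^sub>R (y - x)) $ i)) (at s within {0..1})"
      using has_derivative_compose[OF l deriv] by (simp add: o_def)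
    moreover have "(\<lambda>v. \<Sum>i\<in>UNIV. Df i (x + s *\<^sub>R (y - x)) * (v *\<^sub>R (y - x)) $ i) = (\<lambda>v. v *\<^sub>R g' s)"
      by (auto simp: g'_def sum_distrib_left algebra_simps)
    ultimately show ?thesis by (simp add: has_vector_derivative_def)
  qed
  have FTC: "(g' has_integral (f y - f x)) {0..1}"
    using fundamental_theorem_of_calculus[of 0 1 "\<lambda>s. f (x + s *\<^sub>R (y - x))" g'] der by simp
  have gint: "g' integrable_on {0..1}" using FTC by blast
  have aint: "(\<lambda>s. \<bar>g' s\<bar>) integrable_on {0..1}"
    by (rule integrable_continuous_interval) (intro continuous_intros continuous_on_subset[OF contg], auto)
  have "\<bar>f y - f x\<bar> = \<bar>integral {0..1} g'\<bar>" using FTC by (simp add: integral_unique)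
  also have "\<dots> \<le> integral {0..1} (\<lambda>s. \<bar>g' s\<bar>)"
    using integral_norm_bound_integral[OF gint aint] by simp
  finally have ab: "\<bar>f y - f x\<bar> \<le> integral {0..1} (\<lambda>s. \<bar>g' s\<bar>)" .
  have "((\<lambda>s. \<bar>g' s\<bar>) has_integral integral {0..1} (\<lambda>s. \<bar>g' s\<bar>)) {0..1}" using aint by blast
  hence NI: "(\<integral>\<^sup>+ s. indicator {0..1} s * ennreal \<bar>g' s\<bar> \<partial>lborel) = ennreal (integral {0..1} (\<lambda>s. \<bar>g' s\<bar>))"
  proof -
    have "(\<integral>\<^sup>+ s. ennreal (indicator {0..1} s * \<bar>g' s\<bar>) \<partial>lborel) = ennreal (integral {0..1} (\<lambda>s. \<bar>g' s\<bar>))"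
      using nn_integral_has_integral_lebesgue[of "{0..1::real}" "\<lambda>s. \<bar>g' s\<bar>"] \<open>((\<lambda>s. \<bar>g' s\<bar>) has_integral _) _\<close> by simp
    moreover have "(\<integral>\<^sup>+ s. ennreal (indicator {0..1} s * \<bar>g' s\<bar>) \<partial>lborel) = (\<integral>\<^sup>+ s. indicator {0..1} s * ennreal \<bar>g' s\<bar> \<partial>lborel)"
      by (intro nn_integral_cong) (simp add: indicator_def)
    ultimately show ?thesis by simp
  qed
  have mg[measurable]: "g' \<in> borel_measurable borel" by (rule borel_measurable_continuous_onI[OF contg])
  have mG[measurable]: "G \<in> borel_measurable borel" by (rule borel_measurable_continuous_onI[OF contG])
  have CS: "(\<integral>\<^sup>+ s. (indicator {0..1} s * ennreal \<bar>g' s\<bar>) * indicator {0..1::real} s \<partial>lborel)\<^sup>2 \<le> (\<integral>\<^sup>+ s. (indicator {0..1} s * ennreal \<bar>g' s\<bar>)\<^sup>2 \<partial>lborel) * (\<integral>\<^sup>+ s. (indicator {0..1::real} s)\<^sup>2 \<partial>lborel)"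
    by (rule Cauchy_Schwarz_nn_integral) measurable
  have "ennreal ((f y - f x)\<^sup>2) = (ennreal \<bar>f y - f x\<bar>)\<^sup>2"
    by (simp add: ennreal_power)
  also have "\<dots> \<le> (ennreal (integral {0..1} (\<lambda>s. \<bar>g' s\<bar>)))\<^sup>2"
    using ab by (intro power_mono ennreal_leI) auto
  also have "\<dots> = (\<integral>\<^sup>+ s. (indicator {0..1} s * ennreal \<bar>g' s\<bar>) * indicator {0..1} s \<partial>lborel)\<^sup>2"
    unfolding NI[symmetric] by (rule arg_cong[where f="\<lambda>z. z\<^sup>2"], rule nn_integral_cong) (simp add: indicator_def)
  also have "\<dots> \<le> (\<integral>\<^sup>+ s. (indicator {0..1} s * ennreal \<bar>g' s\<bar>)\<^sup>2 \<partial>lborel) * (\<integral>\<^sup>+ s. (indicator {0..1::real} s)\<^sup>2 \<partial>lborel)"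
    by (rule CS)
  also have "(\<integral>\<^sup>+ s. (indicator {0..1::real} s)\<^sup>2 \<partial>lborel) = (1::ennreal)"
  proof -
    have "(\<integral>\<^sup>+ s. (indicator {0..1::real} s)\<^sup>2 \<partial>lborel) = (\<integral>\<^sup>+ s. indicator {0..1::real} s \<partial>lborel)"
      by (intro nn_integral_cong) (simp add: indicator_def)
    thus ?thesis by simp
  qed
  also have "(\<integral>\<^sup>+ s. (indicator {0..1} s * ennreal \<bar>g' s\<bar>)\<^sup>2 \<partial>lborel) \<le> (\<integral>\<^sup>+ s. indicator {0..1} s * ennreal (Q * G s) \<partial>lborel)"
  proof (rule nn_integral_mono)
    fix s
    have "(g' s)\<^sup>2 \<le> G s * Q"
      unfolding g'_def G_def Q_def by (rule Cauchy_Schwarz_ineq_sum)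
    hence "(ennreal \<bar>g' s\<bar>)\<^sup>2 \<le> ennreal (Q * G s)"
      by (simp add: ennreal_power mult.commute ennreal_leI)
    thus "(indicator {0..1} s * ennreal \<bar>g' s\<bar>)\<^sup>2 \<le> indicator {0..1} s * ennreal (Q * G s)"
      by (simp add: indicator_def)
  qed
  also have "(\<integral>\<^sup>+ s. indicator {0..1} s * ennreal (Q * G s) \<partial>lborel) = ennreal Q * (\<integral>\<^sup>+ s. indicator {0..1} s * ennreal (G s) \<partial>lborel)"
  proof -
    have Q0: "0 \<le> Q" unfolding Q_def by (simp add: sum_nonneg)
    have "(\<integral>\<^sup>+ s. indicator {0..1} s * ennreal (Q * G s) \<partial>lborel) = (\<integral>\<^sup>+ s. ennreal Q * (indicator {0..1} s * ennreal (G s)) \<partial>lborel)"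
      using Q0 by (intro nn_integral_cong) (simp add: ennreal_mult' mult_ac)
    also have "\<dots> = ennreal Q * (\<integral>\<^sup>+ s. indicator {0..1} s * ennreal (G s) \<partial>lborel)"
      by (rule nn_integral_cmult) measurable
    finally show ?thesis .
  qed
  finally show ?thesis by (simp add: Q_def G_def)
qed

lemma jensen_cell:
  fixes f :: "real ^ 'd::finite \<Rightarrow> real" and A :: "(real ^ 'd) set"
  assumes fi: "integrable lborel f" and A[measurable]: "A \<in> sets borel"
    and EA: "emeasure lborel A = ennreal V" and V: "0 < V"
  shows "ennreal (((\<integral> y. f y * indicator A y \<partial>lborel) / V - f x)\<^sup>2)
     \<le> ennreal (1 / V) * (\<integral>\<^sup>+ y. indicator A y * ennreal ((f y - f x)\<^sup>2) \<partial>lborel)"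
proof -
  have fm[measurable]: "f \<in> borel_measurable borel" using borel_measurable_integrable[OF fi] by simp
  have iA: "integrable lborel (indicator A :: _ \<Rightarrow> real)"
    by (rule integrable_real_indicator) (use EA in auto)
  have i1: "integrable lborel (\<lambda>y. f y * indicator A y)"
    using integrable_mult_indicator[OF _ fi, of A] by (simp add: mult.commute)
  have i2: "integrable lborel (\<lambda>y. f x * indicator A y)" using iA by simp
  have mA: "measure lborel A = V" using EA V by (simp add: measure_def)
  define a where "a = (\<integral> y. (f y - f x) * indicator A y \<partial>lborel)"
  have aeq: "a = (\<integral> y. f y * indicator A y \<partial>lborel) - f x * V"
  proof -
    have "a = (\<integral> y. f y * indicator A y - f x * indicator A y \<partial>lborel)"
      unfolding a_def by (simp add: left_diff_distrib)
    also have "\<dots> = (\<integral> y. f y * indicator A y \<partial>lborel) - (\<integral> y. f x * indicator A y \<partial>lborel)"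
      by (rule Bochner_Integration.integral_diff[OF i1 i2])
    also have "(\<integral> y. f x * indicator A y \<partial>lborel) = f x * V" using mA by simp
    finally show ?thesis .
  qed
  have eq1: "((\<integral> y. f y * indicator A y \<partial>lborel) / V - f x)\<^sup>2 = a\<^sup>2 * (1 / V)\<^sup>2"
    using V by (simp add: aeq field_simps power2_eq_square)
  have i3: "integrable lborel (\<lambda>y. \<bar>f y - f x\<bar> * indicator A y)"
  proof -
    have "integrable lborel (\<lambda>y. (f y - f x) * indicator A y)"
      using Bochner_Integration.integrable_diff[OF i1 i2] by (simp add: left_diff_distrib)
    hence "integrable lborel (\<lambda>y. \<bar>(f y - f x) * indicator A y\<bar>)" by (rule integrable_abs)
    thus ?thesis by (simp add: abs_mult)
  qed
  have "\<bar>a\<bar> \<le> (\<integral> y. \<bar>(f y - f x) * indicator A y\<bar> \<partial>lborel)" unfolding a_def by (rule integral_abs_bound)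
  hence ab: "\<bar>a\<bar> \<le> (\<integral> y. \<bar>f y - f x\<bar> * indicator A y \<partial>lborel)" by (simp add: abs_mult)
  have "ennreal (\<integral> y. \<bar>f y - f x\<bar> * indicator A y \<partial>lborel) = (\<integral>\<^sup>+ y. ennreal (\<bar>f y - f x\<bar> * indicator A y) \<partial>lborel)"
    by (rule nn_integral_eq_integral[symmetric, OF i3]) simp
  also have "\<dots> = (\<integral>\<^sup>+ y. (indicator A y * ennreal \<bar>f y - f x\<bar>) * indicator A y \<partial>lborel)"
    by (intro nn_integral_cong) (simp add: indicator_def)
  finally have NI: "ennreal (\<integral> y. \<bar>f y - f x\<bar> * indicator A y \<partial>lborel) = (\<integral>\<^sup>+ y. (indicator A y * ennreal \<bar>f y - f x\<bar>) * indicator A y \<partial>lborel)" .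
  have CS: "(\<integral>\<^sup>+ y. (indicator A y * ennreal \<bar>f y - f x\<bar>) * indicator A y \<partial>lborel)\<^sup>2
     \<le> (\<integral>\<^sup>+ y. (indicator A y * ennreal \<bar>f y - f x\<bar>)\<^sup>2 \<partial>lborel) * (\<integral>\<^sup>+ y. (indicator A y)\<^sup>2 \<partial>lborel)"
    by (rule Cauchy_Schwarz_nn_integral) measurable
  have e2: "(\<integral>\<^sup>+ y. (indicator A y)\<^sup>2 \<partial>lborel) = ennreal V"
  proof -
    have "(\<integral>\<^sup>+ y. (indicator A y)\<^sup>2 \<partial>lborel) = (\<integral>\<^sup>+ y. indicator A y \<partial>lborel)"
      by (intro nn_integral_cong) (simp add: indicator_def)
    thus ?thesis using EA by simp
  qed
  have e3: "(\<integral>\<^sup>+ y. (indicator A y * ennreal \<bar>f y - f x\<bar>)\<^sup>2 \<partial>lborel) = (\<integral>\<^sup>+ y. indicator A y * ennreal ((f y - f x)\<^sup>2) \<partial>lborel)"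
    by (intro nn_integral_cong) (simp add: indicator_def ennreal_power)
  have "ennreal (a\<^sup>2) = (ennreal \<bar>a\<bar>)\<^sup>2" by (simp add: ennreal_power)
  also have "\<dots> \<le> (ennreal (\<integral> y. \<bar>f y - f x\<bar> * indicator A y \<partial>lborel))\<^sup>2"
    using ab by (intro power_mono ennreal_leI) auto
  also have "\<dots> \<le> (\<integral>\<^sup>+ y. indicator A y * ennreal ((f y - f x)\<^sup>2) \<partial>lborel) * ennreal V"
    using CS unfolding NI e2 e3 .
  finally have a2: "ennreal (a\<^sup>2) \<le> (\<integral>\<^sup>+ y. indicator A y * ennreal ((f y - f x)\<^sup>2) \<partial>lborel) * ennreal V" .
  have "ennreal (((\<integral> y. f y * indicator A y \<partial>lborel) / V - f x)\<^sup>2) = ennreal (a\<^sup>2) * ennreal ((1 / V)\<^sup>2)"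
    unfolding eq1 by (simp add: ennreal_mult')
  also have "\<dots> \<le> (\<integral>\<^sup>+ y. indicator A y * ennreal ((f y - f x)\<^sup>2) \<partial>lborel) * ennreal V * ennreal ((1 / V)\<^sup>2)"
    by (intro mult_right_mono a2) simp
  also have "\<dots> = (\<integral>\<^sup>+ y. indicator A y * ennreal ((f y - f x)\<^sup>2) \<partial>lborel) * (ennreal V * ennreal ((1 / V)\<^sup>2))"
    by (simp add: mult.assoc)
  also have "ennreal V * ennreal ((1 / V)\<^sup>2) = ennreal (1 / V)"
    using V by (simp add: ennreal_mult'[symmetric] power2_eq_square)
  finally show ?thesis by (simp add: mult.commute)
qed

lemma affine_nn:
  fixes g :: "real ^ 'd::finite \<Rightarrow> ennreal" and t :: real
  assumes [measurable]: "g \<in> borel_measurable borel" and t: "0 < t"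
  shows "(\<integral>\<^sup>+ y. g (a + t *\<^sub>R y) \<partial>lborel) = ennreal (1 / t ^ CARD('d)) * (\<integral>\<^sup>+ y. g y \<partial>lborel)"
proof -
  have "(\<integral>\<^sup>+ y. g y \<partial>lborel) = ennreal (t ^ CARD('d)) * (\<integral>\<^sup>+ y. g (a + t *\<^sub>R y) \<partial>lborel)"
    using t by (subst lborel_affine[of t a]) (simp_all add: nn_integral_density nn_integral_distr nn_integral_cmult)
  hence "ennreal (1 / t ^ CARD('d)) * (\<integral>\<^sup>+ y. g y \<partial>lborel)
      = ennreal (1 / t ^ CARD('d)) * ennreal (t ^ CARD('d)) * (\<integral>\<^sup>+ y. g (a + t *\<^sub>R y) \<partial>lborel)"
    by (simp add: mult.assoc)
  also have "ennreal (1 / t ^ CARD('d)) * ennreal (t ^ CARD('d)) = 1"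
    using t by (simp add: ennreal_mult'[symmetric])
  finally show ?thesis by simp
qed

lemma hcube_convex:
  fixes x y :: "real ^ 'd::finite"
  assumes "x \<in> hcube h j" "y \<in> hcube h j" "0 \<le> s" "s \<le> 1"
  shows "x + s *\<^sub>R (y - x) \<in> hcube h j"
proof -
  have "x + s *\<^sub>R (y - x) = (1 - s) *\<^sub>R x + s *\<^sub>R y" by (simp add: algebra_simps)
  moreover have "(1 - s) *\<^sub>R x + s *\<^sub>R y \<in> hcube h j"
    unfolding hcube_def
  proof (clarify)
    fix i
    have xi: "real_of_int (j $ i) * h \<le> x $ i" "x $ i < (real_of_int (j $ i) + 1) * h" using assms(1) by (auto simp: hcube_def)
    have yi: "real_of_int (j $ i) * h \<le> y $ i" "y $ i < (real_of_int (j $ i) + 1) * h" using assms(2) by (auto simp: hcube_def)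
    have c: "((1 - s) *\<^sub>R x + s *\<^sub>R y) $ i = (1 - s) * x $ i + s * y $ i" by simp
    have "(1 - s) * (real_of_int (j $ i) * h) + s * (real_of_int (j $ i) * h) \<le> (1 - s) * x $ i + s * y $ i"
      using xi yi assms by (intro add_mono mult_left_mono) auto
    moreover have "(1 - s) * x $ i + s * y $ i < (1 - s) * ((real_of_int (j $ i) + 1) * h) + s * ((real_of_int (j $ i) + 1) * h)"
    proof (cases "s = 1")
      case True thus ?thesis using yi by simp
    next
      case False
      hence "0 < 1 - s" using assms by simp
      thus ?thesis using xi yi assms by (intro add_less_le_mono mult_strict_left_mono mult_left_mono) auto
    qed
    ultimately show "real_of_int (j $ i) * h \<le> ((1 - s) *\<^sub>R x + s *\<^sub>R y) $ i \<and>
         ((1 - s) *\<^sub>R x + s *\<^sub>R y) $ i < (real_of_int (j $ i) + 1) * h"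
      unfolding c by (simp add: algebra_simps)
  qed
  ultimately show ?thesis by simp
qed


lemma core_bound:
  fixes Gf :: "real ^ 'd::finite \<Rightarrow> ennreal"
  assumes Gm[measurable]: "Gf \<in> borel_measurable borel" and h: "0 < h" and s: "0 \<le> s" "s \<le> 1"
  shows "(\<integral>\<^sup>+ x. \<integral>\<^sup>+ y. indicator (hcube h (cell_index h x)) y * Gf (x + s *\<^sub>R (y - x)) \<partial>lborel \<partial>lborel)
     \<le> ennreal (2 ^ CARD('d)) * (ennreal (h ^ CARD('d)) * (\<integral>\<^sup>+ z. Gf z \<partial>lborel))"
proof (cases "1/2 \<le> s")
  case True
  hence s0: "0 < s" by simp
  have "(\<integral>\<^sup>+ x. \<integral>\<^sup>+ y. indicator (hcube h (cell_index h x)) y * Gf (x + s *\<^sub>R (y - x)) \<partial>lborel \<partial>lborel)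
     \<le> (\<integral>\<^sup>+ x. \<integral>\<^sup>+ y. (\<lambda>z. indicator (hcube h (cell_index h x)) z * Gf z) ((x - s *\<^sub>R x) + s *\<^sub>R y) \<partial>lborel \<partial>lborel)"
  proof (intro nn_integral_mono)
    fix x y :: "real ^ 'd"
    have xin: "x \<in> hcube h (cell_index h x)" by (simp add: mem_hcube_cell[OF h])
    have e: "x + s *\<^sub>R (y - x) = (x - s *\<^sub>R x) + s *\<^sub>R y" by (simp add: algebra_simps)
    show "indicator (hcube h (cell_index h x)) y * Gf (x + s *\<^sub>R (y - x))
        \<le> indicator (hcube h (cell_index h x)) ((x - s *\<^sub>R x) + s *\<^sub>R y) * Gf ((x - s *\<^sub>R x) + s *\<^sub>R y)"
      using hcube_convex[OF xin _ s, of y] unfolding e[symmetric] by (auto simp: indicator_def)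
  qed
  also have "\<dots> = (\<integral>\<^sup>+ x. ennreal (1 / s ^ CARD('d)) * (\<integral>\<^sup>+ z. indicator (hcube h (cell_index h x)) z * Gf z \<partial>lborel) \<partial>lborel)"
    by (intro nn_integral_cong affine_nn[OF _ s0]) measurable
  also have "\<dots> = ennreal (1 / s ^ CARD('d)) * (\<integral>\<^sup>+ x. \<integral>\<^sup>+ z. indicator (hcube h (cell_index h x)) z * Gf z \<partial>lborel \<partial>lborel)"
  proof (rule nn_integral_cmult)
    have "(\<lambda>x. \<integral>\<^sup>+ z. indicator (hcube h (cell_index h x)) z * Gf z \<partial>lborel)
       = (\<lambda>x. \<integral>\<^sup>+ z. (if cell_index h z = cell_index h x then 1 else 0) * Gf z \<partial>lborel)"
      by (simp add: indicator_cell[OF h])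
    also have "\<dots> \<in> borel_measurable lborel"
    proof -
      have "(\<lambda>p. (if cell_index h (snd p) = cell_index h (fst p) then 1 else 0) * Gf (snd p)) \<in> borel_measurable (lborel \<Otimes>\<^sub>M lborel)"
        by measurable
      from lborel.borel_measurable_nn_integral_fst[OF this] show ?thesis by simp
    qed
    finally show "(\<lambda>x. \<integral>\<^sup>+ z. indicator (hcube h (cell_index h x)) z * Gf z \<partial>lborel) \<in> borel_measurable lborel" .
  qed
  also have "\<dots> = ennreal (1 / s ^ CARD('d)) * (ennreal (h ^ CARD('d)) * (\<integral>\<^sup>+ z. Gf z \<partial>lborel))"
    by (subst cell_partition[OF h]) auto
  also have "\<dots> \<le> ennreal (2 ^ CARD('d)) * (ennreal (h ^ CARD('d)) * (\<integral>\<^sup>+ z. Gf z \<partial>lborel))"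
  proof (intro mult_right_mono ennreal_leI)
    have "(1/2::real) ^ CARD('d) \<le> s ^ CARD('d)" using True by (intro power_mono) auto
    hence "1 / s ^ CARD('d) \<le> 1 / (1/2::real) ^ CARD('d)" using s0 by (intro divide_left_mono) auto
    thus "1 / s ^ CARD('d) \<le> 2 ^ CARD('d)" by (simp add: power_one_over)
  qed simp
  finally show ?thesis .
next
  case False
  hence s1: "0 < 1 - s" by simp
  have "(\<integral>\<^sup>+ x. \<integral>\<^sup>+ y. indicator (hcube h (cell_index h x)) y * Gf (x + s *\<^sub>R (y - x)) \<partial>lborel \<partial>lborel)
     = (\<integral>\<^sup>+ y. \<integral>\<^sup>+ x. indicator (hcube h (cell_index h y)) x * Gf (x + s *\<^sub>R (y - x)) \<partial>lborel \<partial>lborel)"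
  proof -
    have "(\<integral>\<^sup>+ x. \<integral>\<^sup>+ y. indicator (hcube h (cell_index h x)) y * Gf (x + s *\<^sub>R (y - x)) \<partial>lborel \<partial>lborel)
       = (\<integral>\<^sup>+ x. \<integral>\<^sup>+ y. (if cell_index h y = cell_index h x then 1 else 0) * Gf (x + s *\<^sub>R (y - x)) \<partial>lborel \<partial>lborel)"
      by (simp add: indicator_cell[OF h])
    also have "\<dots> = (\<integral>\<^sup>+ y. \<integral>\<^sup>+ x. (if cell_index h y = cell_index h x then 1 else 0) * Gf (x + s *\<^sub>R (y - x)) \<partial>lborel \<partial>lborel)"
      by (rule lborel_pair.Fubini'[symmetric]) measurable
    also have "\<dots> = (\<integral>\<^sup>+ y. \<integral>\<^sup>+ x. indicator (hcube h (cell_index h y)) x * Gf (x + s *\<^sub>R (y - x)) \<partial>lborel \<partial>lborel)"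
      by (simp add: indicator_cell[OF h] eq_commute)
    finally show ?thesis .
  qed
  also have "\<dots> \<le> (\<integral>\<^sup>+ y. \<integral>\<^sup>+ x. (\<lambda>z. indicator (hcube h (cell_index h y)) z * Gf z) (s *\<^sub>R y + (1 - s) *\<^sub>R x) \<partial>lborel \<partial>lborel)"
  proof (intro nn_integral_mono)
    fix x y :: "real ^ 'd"
    have yin: "y \<in> hcube h (cell_index h y)" by (simp add: mem_hcube_cell[OF h])
    have e: "x + s *\<^sub>R (y - x) = y + (1 - s) *\<^sub>R (x - y)" "x + s *\<^sub>R (y - x) = s *\<^sub>R y + (1 - s) *\<^sub>R x"
      by (simp_all add: algebra_simps)
    have "x \<in> hcube h (cell_index h y) \<Longrightarrow> x + s *\<^sub>R (y - x) \<in> hcube h (cell_index h y)"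
      using hcube_convex[OF yin _, of x "1 - s"] s1 s unfolding e(1) by auto
    thus "indicator (hcube h (cell_index h y)) x * Gf (x + s *\<^sub>R (y - x))
        \<le> indicator (hcube h (cell_index h y)) (s *\<^sub>R y + (1 - s) *\<^sub>R x) * Gf (s *\<^sub>R y + (1 - s) *\<^sub>R x)"
      unfolding e(2)[symmetric] by (auto simp: indicator_def)
  qed
  also have "\<dots> = (\<integral>\<^sup>+ y. ennreal (1 / (1 - s) ^ CARD('d)) * (\<integral>\<^sup>+ z. indicator (hcube h (cell_index h y)) z * Gf z \<partial>lborel) \<partial>lborel)"
    by (intro nn_integral_cong affine_nn[OF _ s1]) measurable
  also have "\<dots> = ennreal (1 / (1 - s) ^ CARD('d)) * (\<integral>\<^sup>+ y. \<integral>\<^sup>+ z. indicator (hcube h (cell_index h y)) z * Gf z \<partial>lborel \<partial>lborel)"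
  proof (rule nn_integral_cmult)
    have "(\<lambda>x. \<integral>\<^sup>+ z. indicator (hcube h (cell_index h x)) z * Gf z \<partial>lborel)
       = (\<lambda>x. \<integral>\<^sup>+ z. (if cell_index h z = cell_index h x then 1 else 0) * Gf z \<partial>lborel)"
      by (simp add: indicator_cell[OF h])
    also have "\<dots> \<in> borel_measurable lborel"
    proof -
      have "(\<lambda>p. (if cell_index h (snd p) = cell_index h (fst p) then 1 else 0) * Gf (snd p)) \<in> borel_measurable (lborel \<Otimes>\<^sub>M lborel)"
        by measurable
      from lborel.borel_measurable_nn_integral_fst[OF this] show ?thesis by simp
    qed
    finally show "(\<lambda>x. \<integral>\<^sup>+ z. indicator (hcube h (cell_index h x)) z * Gf z \<partial>lborel) \<in> borel_measurable lborel" .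
  qed
  also have "\<dots> = ennreal (1 / (1 - s) ^ CARD('d)) * (ennreal (h ^ CARD('d)) * (\<integral>\<^sup>+ z. Gf z \<partial>lborel))"
    by (subst cell_partition[OF h]) auto
  also have "\<dots> \<le> ennreal (2 ^ CARD('d)) * (ennreal (h ^ CARD('d)) * (\<integral>\<^sup>+ z. Gf z \<partial>lborel))"
  proof (intro mult_right_mono ennreal_leI)
    have "(1/2::real) ^ CARD('d) \<le> (1 - s) ^ CARD('d)" using False by (intro power_mono) auto
    hence "1 / (1 - s) ^ CARD('d) \<le> 1 / (1/2::real) ^ CARD('d)" using s1 by (intro divide_left_mono) auto
    thus "1 / (1 - s) ^ CARD('d) \<le> 2 ^ CARD('d)" by (simp add: power_one_over)
  qed simp
  finally show ?thesis .
qed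

lemma sq_diff_cell:
  fixes x y :: "real ^ 'd::finite"
  assumes h: "0 < h" and y: "y \<in> hcube h (cell_index h x)"
  shows "(\<Sum>i\<in>UNIV. (y $ i - x $ i)\<^sup>2) \<le> real CARD('d) * h\<^sup>2"
proof -
  have x: "x \<in> hcube h (cell_index h x)" by (simp add: mem_hcube_cell[OF h])
  have "(y $ i - x $ i)\<^sup>2 \<le> h\<^sup>2" for i
  proof -
    have a: "h * real_of_int (cell_index h x $ i) \<le> x $ i \<and> x $ i < h + h * real_of_int (cell_index h x $ i)"
      using x by (auto simp: hcube_def algebra_simps)
    have b: "h * real_of_int (cell_index h x $ i) \<le> y $ i \<and> y $ i < h + h * real_of_int (cell_index h x $ i)"
      using y by (auto simp: hcube_def algebra_simps)
    have "\<bar>y $ i - x $ i\<bar> \<le> h" using a b by (simp add: abs_le_iff)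
    thus ?thesis by (metis abs_ge_zero power2_abs power_mono)
  qed
  hence "(\<Sum>i\<in>UNIV. (y $ i - x $ i)\<^sup>2) \<le> (\<Sum>i\<in>(UNIV::'d set). h\<^sup>2)" by (intro sum_mono)
  thus ?thesis by simp
qed

lemma bias_bound:
  fixes f :: "real ^ 'd::finite \<Rightarrow> real" and Df :: "'d \<Rightarrow> real ^ 'd \<Rightarrow> real"
  assumes fi: "integrable lborel f"
    and deriv: "\<And>x. (f has_derivative (\<lambda>v. \<Sum>i\<in>UNIV. Df i x * v $ i)) (at x)"
    and cont: "\<And>i. continuous_on UNIV (Df i)"
    and h: "0 < h"
  shows "(\<integral>\<^sup>+ x. ennreal (((\<integral> y. f y * indicator (hcube h (cell_index h x)) y \<partial>lborel) / h ^ CARD('d) - f x)\<^sup>2) \<partial>lborel)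
     \<le> ennreal (real CARD('d) * h\<^sup>2) * ennreal (2 ^ CARD('d)) * (\<integral>\<^sup>+ z. ennreal (\<Sum>i\<in>UNIV. (Df i z)\<^sup>2) \<partial>lborel)"
proof -
  define Gr where "Gr z = (\<Sum>i\<in>UNIV. (Df i z)\<^sup>2)" for z
  have contG: "continuous_on UNIV Gr" unfolding Gr_def by (intro continuous_intros cont)
  have [measurable]: "Gr \<in> borel_measurable borel" by (rule borel_measurable_continuous_onI[OF contG])
  have [measurable]: "f \<in> borel_measurable borel" using borel_measurable_integrable[OF fi] by simp
  define c where "c = ennreal (1 / h ^ CARD('d)) * ennreal (real CARD('d) * h\<^sup>2)"
  define F where "F x y s = indicator (hcube h (cell_index h x)) y * (indicator {0..1::real} s * ennreal (Gr (x + s *\<^sub>R (y - x))))" for x y :: "real ^ 'd" and s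
  have Fm: "(\<lambda>p. F (fst p) (fst (snd p)) (snd (snd p))) \<in> borel_measurable (lborel \<Otimes>\<^sub>M (lborel \<Otimes>\<^sub>M lborel))"
    unfolding F_def indicator_cell[OF h] by measurable
  have step1: "ennreal (((\<integral> y. f y * indicator (hcube h (cell_index h x)) y \<partial>lborel) / h ^ CARD('d) - f x)\<^sup>2)
      \<le> c * (\<integral>\<^sup>+ y. \<integral>\<^sup>+ s. F x y s \<partial>lborel \<partial>lborel)" for x
  proof -
    have J: "ennreal (((\<integral> y. f y * indicator (hcube h (cell_index h x)) y \<partial>lborel) / h ^ CARD('d) - f x)\<^sup>2)
      \<le> ennreal (1 / h ^ CARD('d)) * (\<integral>\<^sup>+ y. indicator (hcube h (cell_index h x)) y * ennreal ((f y - f x)\<^sup>2) \<partial>lborel)"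
      by (rule jensen_cell[OF fi]) (use h in \<open>auto simp: emeasure_hcube\<close>)
    have "(\<integral>\<^sup>+ y. indicator (hcube h (cell_index h x)) y * ennreal ((f y - f x)\<^sup>2) \<partial>lborel)
       \<le> (\<integral>\<^sup>+ y. ennreal (real CARD('d) * h\<^sup>2) * (\<integral>\<^sup>+ s. F x y s \<partial>lborel) \<partial>lborel)"
    proof (rule nn_integral_mono)
      fix y
      show "indicator (hcube h (cell_index h x)) y * ennreal ((f y - f x)\<^sup>2)
          \<le> ennreal (real CARD('d) * h\<^sup>2) * (\<integral>\<^sup>+ s. F x y s \<partial>lborel)"
      proof (cases "y \<in> hcube h (cell_index h x)")
        case True
        have "ennreal ((f y - f x)\<^sup>2) \<le> ennreal (\<Sum>i\<in>UNIV. (y $ i - x $ i)\<^sup>2) *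
           (\<integral>\<^sup>+ s. indicator {0..1} s * ennreal (Gr (x + s *\<^sub>R (y - x))) \<partial>lborel)"
          unfolding Gr_def by (rule seg_bound[OF deriv cont])
        also have "\<dots> \<le> ennreal (real CARD('d) * h\<^sup>2) * (\<integral>\<^sup>+ s. indicator {0..1} s * ennreal (Gr (x + s *\<^sub>R (y - x))) \<partial>lborel)"
          by (intro mult_right_mono ennreal_leI sq_diff_cell[OF h True]) simp
        finally show ?thesis using True by (simp add: F_def)
      qed simp
    qed
    also have "\<dots> = ennreal (real CARD('d) * h\<^sup>2) * (\<integral>\<^sup>+ y. \<integral>\<^sup>+ s. F x y s \<partial>lborel \<partial>lborel)"
      by (rule nn_integral_cmult) (unfold F_def indicator_cell[OF h], measurable)
    finally have K: "(\<integral>\<^sup>+ y. indicator (hcube h (cell_index h x)) y * ennreal ((f y - f x)\<^sup>2) \<partial>lborel)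
       \<le> ennreal (real CARD('d) * h\<^sup>2) * (\<integral>\<^sup>+ y. \<integral>\<^sup>+ s. F x y s \<partial>lborel \<partial>lborel)" .
    show ?thesis using order_trans[OF J mult_left_mono[OF K]] by (simp add: c_def mult.assoc)
  qed
  have "(\<integral>\<^sup>+ x. ennreal (((\<integral> y. f y * indicator (hcube h (cell_index h x)) y \<partial>lborel) / h ^ CARD('d) - f x)\<^sup>2) \<partial>lborel)
     \<le> (\<integral>\<^sup>+ x. c * (\<integral>\<^sup>+ y. \<integral>\<^sup>+ s. F x y s \<partial>lborel \<partial>lborel) \<partial>lborel)"
    by (rule nn_integral_mono) (rule step1)
  also have "\<dots> = c * (\<integral>\<^sup>+ x. \<integral>\<^sup>+ y. \<integral>\<^sup>+ s. F x y s \<partial>lborel \<partial>lborel \<partial>lborel)"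
    by (rule nn_integral_cmult) (unfold F_def indicator_cell[OF h], measurable)
  also have "(\<integral>\<^sup>+ x. \<integral>\<^sup>+ y. \<integral>\<^sup>+ s. F x y s \<partial>lborel \<partial>lborel \<partial>lborel) = (\<integral>\<^sup>+ x. \<integral>\<^sup>+ s. \<integral>\<^sup>+ y. F x y s \<partial>lborel \<partial>lborel \<partial>lborel)"
  proof (rule nn_integral_cong)
    fix x
    show "(\<integral>\<^sup>+ y. \<integral>\<^sup>+ s. F x y s \<partial>lborel \<partial>lborel) = (\<integral>\<^sup>+ s. \<integral>\<^sup>+ y. F x y s \<partial>lborel \<partial>lborel)"
      by (rule pair_sigma_finite.Fubini'[symmetric]) (unfold_locales, unfold F_def indicator_cell[OF h], measurable)
  qed
  also have "\<dots> = (\<integral>\<^sup>+ s. \<integral>\<^sup>+ x. \<integral>\<^sup>+ y. F x y s \<partial>lborel \<partial>lborel \<partial>lborel)"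
    by (rule pair_sigma_finite.Fubini'[symmetric]) (unfold_locales, unfold F_def indicator_cell[OF h], measurable)
  also have "\<dots> \<le> (\<integral>\<^sup>+ s. indicator {0..1::real} s * (ennreal (2 ^ CARD('d)) * (ennreal (h ^ CARD('d)) * (\<integral>\<^sup>+ z. ennreal (Gr z) \<partial>lborel))) \<partial>lborel)"
  proof (rule nn_integral_mono)
    fix s :: real
    show "(\<integral>\<^sup>+ x. \<integral>\<^sup>+ y. F x y s \<partial>lborel \<partial>lborel)
        \<le> indicator {0..1} s * (ennreal (2 ^ CARD('d)) * (ennreal (h ^ CARD('d)) * (\<integral>\<^sup>+ z. ennreal (Gr z) \<partial>lborel)))"
    proof (cases "s \<in> {0..1}")
      case True
      have "(\<integral>\<^sup>+ x. \<integral>\<^sup>+ y. F x y s \<partial>lborel \<partial>lborel)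
          = (\<integral>\<^sup>+ x. \<integral>\<^sup>+ y. indicator (hcube h (cell_index h x)) y * ennreal (Gr (x + s *\<^sub>R (y - x))) \<partial>lborel \<partial>lborel)"
        using True by (simp add: F_def)
      also have "\<dots> \<le> ennreal (2 ^ CARD('d)) * (ennreal (h ^ CARD('d)) * (\<integral>\<^sup>+ z. ennreal (Gr z) \<partial>lborel))"
        by (rule core_bound) (use True h in auto)
      finally show ?thesis using True by simp
    qed (simp add: F_def)
  qed
  also have "\<dots> = ennreal (2 ^ CARD('d)) * (ennreal (h ^ CARD('d)) * (\<integral>\<^sup>+ z. ennreal (Gr z) \<partial>lborel))"
    by (simp add: nn_integral_multc mult.commute)
  finally have "(\<integral>\<^sup>+ x. ennreal (((\<integral> y. f y * indicator (hcube h (cell_index h x)) y \<partial>lborel) / h ^ CARD('d) - f x)\<^sup>2) \<partial>lborel)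
     \<le> c * (ennreal (2 ^ CARD('d)) * (ennreal (h ^ CARD('d)) * (\<integral>\<^sup>+ z. ennreal (Gr z) \<partial>lborel)))"
    by (simp add: mult_left_mono)
  also have "c * (ennreal (2 ^ CARD('d)) * (ennreal (h ^ CARD('d)) * (\<integral>\<^sup>+ z. ennreal (Gr z) \<partial>lborel)))
      = (ennreal (1 / h ^ CARD('d)) * ennreal (h ^ CARD('d))) * ennreal (real CARD('d) * h\<^sup>2) * ennreal (2 ^ CARD('d)) * (\<integral>\<^sup>+ z. ennreal (Gr z) \<partial>lborel)"
    by (simp add: c_def mult_ac)
  also have "ennreal (1 / h ^ CARD('d)) * ennreal (h ^ CARD('d)) = 1"
    using h by (simp add: ennreal_mult'[symmetric])
  finally show ?thesis by (simp add: Gr_def)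
qed

lemma prod_ind:
  fixes g :: "real ^ 'd \<Rightarrow> ennreal"
  assumes [measurable]: "g \<in> borel_measurable borel" "A \<in> sets borel"
  shows "(\<integral>\<^sup>+ y. \<integral>\<^sup>+ z. g y * indicator A y * indicator A z \<partial>lborel \<partial>lborel)
       = (\<integral>\<^sup>+ y. g y * indicator A y \<partial>lborel) * emeasure lborel A"
proof -
  have "(\<integral>\<^sup>+ y. \<integral>\<^sup>+ z. g y * indicator A y * indicator A z \<partial>lborel \<partial>lborel)
      = (\<integral>\<^sup>+ y. g y * indicator A y * emeasure lborel A \<partial>lborel)"
    by (rule nn_integral_cong) (simp add: nn_integral_cmult_indicator)
  also have "\<dots> = (\<integral>\<^sup>+ y. g y * indicator A y \<partial>lborel) * emeasure lborel A"
    by (rule nn_integral_multc) measurable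
  finally show ?thesis .
qed

lemma integrable_ind:
  assumes "integrable lborel g" "A \<in> sets borel"
  shows "integrable lborel (\<lambda>y. g y * indicator A y :: real)"
  using integrable_mult_indicator[of A lborel g] assms by (simp add: mult.commute)

lemma nn_ind_eq:
  assumes "integrable lborel g" "A \<in> sets borel" "\<And>y. 0 \<le> g y"
  shows "(\<integral>\<^sup>+ y. ennreal (g y) * indicator A y \<partial>lborel) = ennreal (\<integral> y. g y * indicator A y \<partial>lborel)"
proof -
  have "(\<integral>\<^sup>+ y. ennreal (g y) * indicator A y \<partial>lborel) = (\<integral>\<^sup>+ y. ennreal (g y * indicator A y) \<partial>lborel)"
    by (rule nn_integral_cong) (simp add: indicator_def)
  also have "\<dots> = ennreal (\<integral> y. g y * indicator A y \<partial>lborel)"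
    by (rule nn_integral_eq_integral[OF integrable_ind[OF assms(1,2)]]) (simp add: assms(3))
  finally show ?thesis .
qed

locale hsetting =
  fixes M :: "'a measure"
    and X :: "real \<Rightarrow> 'a \<Rightarrow> real ^ 'd::finite"
    and f :: "real ^ 'd \<Rightarrow> real"
    and fu :: "real \<Rightarrow> real ^ 'd \<Rightarrow> real ^ 'd \<Rightarrow> real"
    and \<gamma>0 u0 :: real
    and \<phi> kk :: "real ^ 'd \<Rightarrow> real"
    and \<pi> :: "real \<Rightarrow> real"
  assumes prob: "prob_space M"
    and f_nonneg: "\<And>x. 0 \<le> f x"
    and dens: "\<And>t. distributed M lborel (X t) (\<lambda>x. ennreal (f x))"
    and fu_nonneg: "\<And>u y z. 0 < u \<Longrightarrow> 0 \<le> fu u y z"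
    and joint: "\<And>s t. s \<noteq> t \<Longrightarrow>
        distributed M (lborel \<Otimes>\<^sub>M lborel) (\<lambda>\<omega>. (X s \<omega>, X t \<omega>))
          (\<lambda>p. ennreal (fu \<bar>t - s\<bar> (fst p) (snd p)))"
    and f_cont: "continuous_on UNIV f"
    and u0_pos: "0 < u0"
    and phi_pos: "\<And>y. 0 < \<phi> y" and phi_cont: "continuous_on UNIV \<phi>" and phi_int: "integrable lborel \<phi>"
    and A1: "\<And>y u z. 0 < u \<Longrightarrow> u \<le> u0 \<Longrightarrow> fu u y z \<le> \<phi> y * u powr (- \<gamma>0)"
    and kk_pos: "\<And>y. 0 < kk y" and kk_cont: "continuous_on UNIV kk" and kk_int: "integrable lborel kk"
    and A2: "\<And>y u z. u0 \<le> u \<Longrightarrow> \<bar>fu u y z - f y * f z\<bar> \<le> kk y * \<pi> u"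
begin

lemma X_meas[measurable]: "X t \<in> measurable M lborel"
  using distributed_measurable[OF dens] .

lemma X_meas'[measurable]: "X t \<in> borel_measurable M"
  using X_meas by (simp add: measurable_lborel2)

lemma f_meas[measurable]: "f \<in> borel_measurable borel"
  by (rule borel_measurable_continuous_onI[OF f_cont])
lemma phi_meas[measurable]: "\<phi> \<in> borel_measurable borel"
  by (rule borel_measurable_continuous_onI[OF phi_cont])
lemma kk_meas[measurable]: "kk \<in> borel_measurable borel"
  by (rule borel_measurable_continuous_onI[OF kk_cont])

lemma pi_nonneg: "u0 \<le> u \<Longrightarrow> 0 \<le> \<pi> u"
proof -
  assume u: "u0 \<le> u"
  have "0 \<le> kk 0 * \<pi> u" using A2[OF u, of 0 0] by linarith
  thus ?thesis using kk_pos[of 0] by (simp add: zero_le_mult_iff)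
qed

lemma marginal:
  assumes A[measurable]: "A \<in> sets borel"
  shows "emeasure M {\<omega>\<in>space M. X t \<omega> \<in> A} = (\<integral>\<^sup>+ y. ennreal (f y) * indicator A y \<partial>lborel)"
proof -
  have "{\<omega>\<in>space M. X t \<omega> \<in> A} = X t -` A \<inter> space M" by auto
  thus ?thesis using distributed_emeasure[OF dens, of A] by simp
qed

lemma joint_emeasure:
  assumes A[measurable]: "A \<in> sets borel" and st: "s \<noteq> t"
  shows "emeasure M {\<omega>\<in>space M. X s \<omega> \<in> A \<and> X t \<omega> \<in> A}
     = (\<integral>\<^sup>+ y. \<integral>\<^sup>+ z. ennreal (fu \<bar>t - s\<bar> y z) * indicator A y * indicator A z \<partial>lborel \<partial>lborel)"
proof -
  have D: "distributed M (lborel \<Otimes>\<^sub>M lborel) (\<lambda>\<omega>. (X s \<omega>, X t \<omega>))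
          (\<lambda>p. ennreal (fu \<bar>t - s\<bar> (fst p) (snd p)))" using joint[OF st] .
  have [measurable]: "(\<lambda>p. ennreal (fu \<bar>t - s\<bar> (fst p) (snd p))) \<in> borel_measurable (lborel \<Otimes>\<^sub>M lborel)"
    using distributed_borel_measurable[OF D] .
  have "{\<omega>\<in>space M. X s \<omega> \<in> A \<and> X t \<omega> \<in> A} = (\<lambda>\<omega>. (X s \<omega>, X t \<omega>)) -` (A \<times> A) \<inter> space M" by auto
  hence "emeasure M {\<omega>\<in>space M. X s \<omega> \<in> A \<and> X t \<omega> \<in> A}
     = (\<integral>\<^sup>+ p. ennreal (fu \<bar>t - s\<bar> (fst p) (snd p)) * indicator (A \<times> A) p \<partial>(lborel \<Otimes>\<^sub>M lborel))"
    using distributed_emeasure[OF D, of "A \<times> A"] by simp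
  also have "\<dots> = (\<integral>\<^sup>+ y. \<integral>\<^sup>+ z. ennreal (fu \<bar>t - s\<bar> (fst (y,z)) (snd (y,z))) * indicator (A \<times> A) (y,z) \<partial>lborel \<partial>lborel)"
    by (rule lborel.nn_integral_fst[symmetric]) measurable
  also have "\<dots> = (\<integral>\<^sup>+ y. \<integral>\<^sup>+ z. ennreal (fu \<bar>t - s\<bar> y z) * indicator A y * indicator A z \<partial>lborel \<partial>lborel)"
    by (simp add: indicator_times mult.assoc)
  finally show ?thesis .
qed

lemma f_int: "integrable lborel f"
proof -
  interpret prob_space M by (rule prob)
  have "(\<integral>\<^sup>+ y. ennreal (f y) \<partial>lborel) = emeasure M {\<omega>\<in>space M. X 0 \<omega> \<in> UNIV}"
    using marginal[of UNIV 0] by simp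
  also have "\<dots> = 1" by (simp add: emeasure_space_1)
  finally have "(\<integral>\<^sup>+ y. ennreal (f y) \<partial>lborel) = 1" .
  thus ?thesis by (intro integrableI_nonneg) (auto simp: f_nonneg)
qed

lemma pair_bound:
  assumes A[measurable]: "A = hcube h j" and h: "0 < h" and st: "s \<noteq> t"
  shows "measure M {\<omega>\<in>space M. X s \<omega> \<in> A \<and> X t \<omega> \<in> A}
     \<le> (measure M {\<omega>\<in>space M. X s \<omega> \<in> A})\<^sup>2 + h ^ CARD('d) *
        (if \<bar>t - s\<bar> \<le> u0 then \<bar>t - s\<bar> powr (- \<gamma>0) * (\<integral> y. \<phi> y * indicator A y \<partial>lborel)
         else \<pi> \<bar>t - s\<bar> * (\<integral> y. kk y * indicator A y \<partial>lborel))"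
    (is "?P \<le> ?p\<^sup>2 + h ^ CARD('d) * ?B")
proof -
  interpret prob_space M by (rule prob)
  have Aset[measurable]: "A \<in> sets borel" using A by simp
  define u where "u = \<bar>t - s\<bar>"
  have u: "0 < u" using st by (simp add: u_def)
  have EA: "emeasure lborel A = ennreal (h ^ CARD('d))" using A emeasure_hcube[OF h] by simp
  have FA: "(\<integral>\<^sup>+ y. ennreal (f y) * indicator A y \<partial>lborel) = ennreal ?p"
    using marginal[OF Aset, of s] by (simp add: emeasure_eq_measure)
  have p0: "0 \<le> ?p" by simp
  have B0: "0 \<le> ?B"
  proof -
    have "0 \<le> (\<integral> y. \<phi> y * indicator A y \<partial>lborel)"
      by (rule integral_nonneg_AE) (auto intro!: AE_I2 mult_nonneg_nonneg less_imp_le[OF phi_pos])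
    moreover have "0 \<le> (\<integral> y. kk y * indicator A y \<partial>lborel)"
      by (rule integral_nonneg_AE) (auto intro!: AE_I2 mult_nonneg_nonneg less_imp_le[OF kk_pos])
    ultimately show ?thesis using pi_nonneg[of u] u by (auto simp: u_def[symmetric])
  qed
  have "emeasure M {\<omega>\<in>space M. X s \<omega> \<in> A \<and> X t \<omega> \<in> A} \<le> ennreal (?p\<^sup>2 + h ^ CARD('d) * ?B)"
  proof (cases "u \<le> u0")
    case True
    have "emeasure M {\<omega>\<in>space M. X s \<omega> \<in> A \<and> X t \<omega> \<in> A}
       = (\<integral>\<^sup>+ y. \<integral>\<^sup>+ z. ennreal (fu u y z) * indicator A y * indicator A z \<partial>lborel \<partial>lborel)"
      using joint_emeasure[OF Aset st] by (simp add: u_def)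
    also have "\<dots> \<le> (\<integral>\<^sup>+ y. \<integral>\<^sup>+ z. ennreal (u powr (- \<gamma>0) * \<phi> y) * indicator A y * indicator A z \<partial>lborel \<partial>lborel)"
      by (intro nn_integral_mono mult_right_mono ennreal_leI) (use A1[OF u True] in \<open>auto simp: mult.commute\<close>)
    also have "\<dots> = (\<integral>\<^sup>+ y. ennreal (u powr (- \<gamma>0) * \<phi> y) * indicator A y \<partial>lborel) * ennreal (h ^ CARD('d))"
      by (subst prod_ind) (auto simp: EA)
    also have "(\<integral>\<^sup>+ y. ennreal (u powr (- \<gamma>0) * \<phi> y) * indicator A y \<partial>lborel)
        = ennreal (\<integral> y. u powr (- \<gamma>0) * \<phi> y * indicator A y \<partial>lborel)"
      by (rule nn_ind_eq) (auto intro!: phi_int less_imp_le[OF phi_pos] mult_nonneg_nonneg)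
    also have "(\<integral> y. u powr (- \<gamma>0) * \<phi> y * indicator A y \<partial>lborel) = u powr (- \<gamma>0) * (\<integral> y. \<phi> y * indicator A y \<partial>lborel)"
      by (simp add: mult.assoc)
    also have "ennreal (u powr (- \<gamma>0) * (\<integral> y. \<phi> y * indicator A y \<partial>lborel)) * ennreal (h ^ CARD('d))
        = ennreal (h ^ CARD('d) * ?B)"
      using True h by (simp add: u_def[symmetric] ennreal_mult' mult.commute)
    also have "\<dots> \<le> ennreal (?p\<^sup>2 + h ^ CARD('d) * ?B)" by (intro ennreal_leI) simp
    finally show ?thesis .
  next
    case False
    have "emeasure M {\<omega>\<in>space M. X s \<omega> \<in> A \<and> X t \<omega> \<in> A}
       = (\<integral>\<^sup>+ y. \<integral>\<^sup>+ z. ennreal (fu u y z) * indicator A y * indicator A z \<partial>lborel \<partial>lborel)"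
      using joint_emeasure[OF Aset st] by (simp add: u_def)
    also have "\<dots> \<le> (\<integral>\<^sup>+ y. \<integral>\<^sup>+ z. (ennreal (f y) * indicator A y) * (ennreal (f z) * indicator A z)
             + ennreal (\<pi> u * kk y) * indicator A y * indicator A z \<partial>lborel \<partial>lborel)"
    proof (intro nn_integral_mono)
      fix y z
      have "fu u y z \<le> f y * f z + \<pi> u * kk y" using A2[of u y z] False by (auto simp: mult.commute)
      hence "ennreal (fu u y z) \<le> ennreal (f y) * ennreal (f z) + ennreal (\<pi> u * kk y)"
        using f_nonneg pi_nonneg[of u] kk_pos[of y] False
        by (simp add: ennreal_mult'[symmetric] ennreal_plus[symmetric] del: ennreal_plus)
      thus "ennreal (fu u y z) * indicator A y * indicator A z \<le> (ennreal (f y) * indicator A y) * (ennreal (f z) * indicator A z)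
             + ennreal (\<pi> u * kk y) * indicator A y * indicator A z"
        by (auto simp: indicator_def)
    qed
    also have "\<dots> = (\<integral>\<^sup>+ y. \<integral>\<^sup>+ z. (ennreal (f y) * indicator A y) * (ennreal (f z) * indicator A z) \<partial>lborel \<partial>lborel)
             + (\<integral>\<^sup>+ y. \<integral>\<^sup>+ z. ennreal (\<pi> u * kk y) * indicator A y * indicator A z \<partial>lborel \<partial>lborel)"
      by (subst nn_integral_add[symmetric]) (measurable, rule nn_integral_cong, rule nn_integral_add, measurable)
    also have "(\<integral>\<^sup>+ y. \<integral>\<^sup>+ z. (ennreal (f y) * indicator A y) * (ennreal (f z) * indicator A z) \<partial>lborel \<partial>lborel)
        = ennreal ?p * ennreal ?p"
      by (simp add: nn_integral_cmult nn_integral_multc FA)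
    also have "(\<integral>\<^sup>+ y. \<integral>\<^sup>+ z. ennreal (\<pi> u * kk y) * indicator A y * indicator A z \<partial>lborel \<partial>lborel)
        = (\<integral>\<^sup>+ y. ennreal (\<pi> u * kk y) * indicator A y \<partial>lborel) * ennreal (h ^ CARD('d))"
      by (subst prod_ind) (auto simp: EA)
    also have "(\<integral>\<^sup>+ y. ennreal (\<pi> u * kk y) * indicator A y \<partial>lborel)
        = ennreal (\<integral> y. \<pi> u * kk y * indicator A y \<partial>lborel)"
      by (rule nn_ind_eq) (use pi_nonneg[of u] False in \<open>auto intro!: kk_int less_imp_le[OF kk_pos] mult_nonneg_nonneg\<close>)
    also have "(\<integral> y. \<pi> u * kk y * indicator A y \<partial>lborel) = \<pi> u * (\<integral> y. kk y * indicator A y \<partial>lborel)"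
      by (simp add: mult.assoc)
    also have "ennreal ?p * ennreal ?p + ennreal (\<pi> u * (\<integral> y. kk y * indicator A y \<partial>lborel)) * ennreal (h ^ CARD('d))
        = ennreal (?p\<^sup>2 + h ^ CARD('d) * ?B)"
      using False B0 h p0 by (simp add: u_def[symmetric] ennreal_mult'[symmetric] ennreal_plus[symmetric] power2_eq_square mult.commute del: ennreal_plus)
    finally show ?thesis by simp
  qed
  hence "ennreal ?P \<le> ennreal (?p\<^sup>2 + h ^ CARD('d) * ?B)" by (simp add: emeasure_eq_measure)
  thus ?thesis using B0 h p0 by (subst (asm) ennreal_le_iff) auto
qed

end

lemma lag_sum_bound:
  fixes B :: "real \<Rightarrow> real" and \<delta> :: real
  assumes d: "0 < \<delta>" and B0: "\<And>m::nat. 1 \<le> m \<Longrightarrow> 0 \<le> B (real m * \<delta>)"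
  shows "(\<Sum>k\<in>{1..n}. \<Sum>l\<in>{1..n}-{k}. B \<bar>real l * \<delta> - real k * \<delta>\<bar>) \<le> 2 * real n * (\<Sum>m=1..n. B (real m * \<delta>))"
proof -
  have inner: "(\<Sum>l\<in>{1..n}-{k}. B \<bar>real l * \<delta> - real k * \<delta>\<bar>) \<le> 2 * (\<Sum>m=1..n. B (real m * \<delta>))"
    if k: "k \<in> {1..n}" for k
  proof -
    have a1: "\<bar>real l * \<delta> - real k * \<delta>\<bar> = real (k - l) * \<delta>" if "l < k" for l
    proof -
      have "real l * \<delta> < real k * \<delta>" using that d by simp
      thus ?thesis using that by (simp add: of_nat_diff left_diff_distrib)
    qed
    have a2: "\<bar>real l * \<delta> - real k * \<delta>\<bar> = real (l - k) * \<delta>" if "k < l" for l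
    proof -
      have "real k * \<delta> < real l * \<delta>" using that d by simp
      thus ?thesis using that by (simp add: of_nat_diff left_diff_distrib)
    qed
    have split: "{1..n}-{k} = {l\<in>{1..n}. l < k} \<union> {l\<in>{1..n}. k < l}" by auto
    have "(\<Sum>l\<in>{1..n}-{k}. B \<bar>real l * \<delta> - real k * \<delta>\<bar>)
        = (\<Sum>l\<in>{l\<in>{1..n}. l < k}. B \<bar>real l * \<delta> - real k * \<delta>\<bar>) + (\<Sum>l\<in>{l\<in>{1..n}. k < l}. B \<bar>real l * \<delta> - real k * \<delta>\<bar>)"
      unfolding split by (rule sum.union_disjoint) auto
    also have "(\<Sum>l\<in>{l\<in>{1..n}. l < k}. B \<bar>real l * \<delta> - real k * \<delta>\<bar>) = (\<Sum>l\<in>{l\<in>{1..n}. l < k}. B (real (k - l) * \<delta>))"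
      by (rule sum.cong) (auto simp: a1 a2)
    also have "\<dots> = (\<Sum>m\<in>(\<lambda>l. k - l) ` {l\<in>{1..n}. l < k}. B (real m * \<delta>))"
      by (rule sum.reindex[symmetric, unfolded comp_def]) (auto simp: inj_on_def)
    also have "\<dots> \<le> (\<Sum>m=1..n. B (real m * \<delta>))"
      by (rule sum_mono2) (use k in \<open>auto intro!: B0\<close>)
    also have "(\<Sum>l\<in>{l\<in>{1..n}. k < l}. B \<bar>real l * \<delta> - real k * \<delta>\<bar>) = (\<Sum>l\<in>{l\<in>{1..n}. k < l}. B (real (l - k) * \<delta>))"
      by (rule sum.cong) (auto simp: a1 a2)
    also have "\<dots> = (\<Sum>m\<in>(\<lambda>l. l - k) ` {l\<in>{1..n}. k < l}. B (real m * \<delta>))"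
      by (rule sum.reindex[symmetric, unfolded comp_def]) (auto simp: inj_on_def)
    also have "\<dots> \<le> (\<Sum>m=1..n. B (real m * \<delta>))"
      by (rule sum_mono2) (use k in \<open>auto intro!: B0\<close>)
    finally show ?thesis by simp
  qed
  have "(\<Sum>k\<in>{1..n}. \<Sum>l\<in>{1..n}-{k}. B \<bar>real l * \<delta> - real k * \<delta>\<bar>) \<le> (\<Sum>k\<in>{1..n}. 2 * (\<Sum>m=1..n. B (real m * \<delta>)))"
    by (rule sum_mono) (rule inner)
  also have "\<dots> = 2 * real n * (\<Sum>m=1..n. B (real m * \<delta>))" by simp
  finally show ?thesis .
qed

context hsetting begin

definition pA :: "real \<Rightarrow> real ^ 'd \<Rightarrow> real" where
  "pA h x = (\<integral> y. f y * indicator (hcube h (cell_index h x)) y \<partial>lborel)"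
definition PhiA :: "real \<Rightarrow> real ^ 'd \<Rightarrow> real" where
  "PhiA h x = (\<integral> y. \<phi> y * indicator (hcube h (cell_index h x)) y \<partial>lborel)"
definition KA :: "real \<Rightarrow> real ^ 'd \<Rightarrow> real" where
  "KA h x = (\<integral> y. kk y * indicator (hcube h (cell_index h x)) y \<partial>lborel)"
definition BA :: "real \<Rightarrow> real ^ 'd \<Rightarrow> real \<Rightarrow> real" where
  "BA h x u = (if u \<le> u0 then u powr (- \<gamma>0) * PhiA h x else \<pi> u * KA h x)"

lemma PhiA_nonneg: "0 \<le> PhiA h x"
  unfolding PhiA_def by (rule integral_nonneg_AE) (auto intro!: AE_I2 mult_nonneg_nonneg less_imp_le[OF phi_pos])
lemma KA_nonneg: "0 \<le> KA h x"
  unfolding KA_def by (rule integral_nonneg_AE) (auto intro!: AE_I2 mult_nonneg_nonneg less_imp_le[OF kk_pos])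
lemma BA_nonneg: "0 < u \<Longrightarrow> 0 \<le> BA h x u"
  unfolding BA_def using PhiA_nonneg KA_nonneg pi_nonneg by auto

lemma marginal_measure:
  assumes h: "0 < h"
  shows "measure M {\<omega>\<in>space M. X t \<omega> \<in> hcube h (cell_index h x)} = pA h x"
proof -
  interpret prob_space M by (rule prob)
  have "ennreal (measure M {\<omega>\<in>space M. X t \<omega> \<in> hcube h (cell_index h x)})
     = (\<integral>\<^sup>+ y. ennreal (f y) * indicator (hcube h (cell_index h x)) y \<partial>lborel)"
    using marginal[of "hcube h (cell_index h x)" t] by (simp add: emeasure_eq_measure)
  also have "\<dots> = ennreal (pA h x)" unfolding pA_def
    by (rule nn_ind_eq) (auto intro: f_int f_nonneg)
  finally show ?thesis by (simp add: pA_def integral_nonneg_AE f_nonneg)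
qed

lemma pointwise_bound:
  assumes h: "0 < h" and d: "0 < \<delta>" and n: "0 < n"
  shows "(\<integral>\<^sup>+ \<omega>. ennreal ((hist_est X \<delta> h n \<omega> x - f x)\<^sup>2) \<partial>M)
     \<le> ennreal ((pA h x / h ^ CARD('d) - f x)\<^sup>2 + pA h x / (real n * h ^ CARD('d) * h ^ CARD('d))
          + 2 / (real n * h ^ CARD('d)) * (\<Sum>m=1..n. BA h x (real m * \<delta>)))"
proof -
  define A where "A = hcube h (cell_index h x)"
  define c where "c = 1 / (real n * h ^ CARD('d))"
  have c0: "0 \<le> c" using h by (simp add: c_def)
  have Am[measurable]: "A \<in> sets borel" by (simp add: A_def)
  have BAeq: "BA h x \<bar>t - s\<bar> = (if \<bar>t - s\<bar> \<le> u0 then \<bar>t - s\<bar> powr (- \<gamma>0) * (\<integral> y. \<phi> y * indicator A y \<partial>lborel)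
         else \<pi> \<bar>t - s\<bar> * (\<integral> y. kk y * indicator A y \<partial>lborel))" for s t
    by (simp add: BA_def PhiA_def KA_def A_def)
  have main: "(\<integral>\<^sup>+ \<omega>. ennreal ((c * (\<Sum>k=1..n. indicator A (X (real k * \<delta>) \<omega>)) - f x)\<^sup>2) \<partial>M)
     \<le> ennreal ((c * real n * pA h x - f x)\<^sup>2 + c\<^sup>2 * real n * pA h x
          + c\<^sup>2 * (\<Sum>k\<in>{1..n}. \<Sum>l\<in>{1..n}-{k}. h ^ CARD('d) * BA h x \<bar>real l * \<delta> - real k * \<delta>\<bar>))"
  proof (rule indicator_sum_moment[OF prob, where N=lborel])
    show "(\<lambda>\<omega>. X (real k * \<delta>) \<omega>) \<in> M \<rightarrow>\<^sub>M lborel" for k by simp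
    show "A \<in> sets lborel" using Am by simp
    show "0 \<le> c" by (rule c0)
    show "measure M {\<omega> \<in> space M. X (real k * \<delta>) \<omega> \<in> A} = pA h x" for k
      unfolding A_def by (rule marginal_measure[OF h])
    fix k l assume k: "k \<in> {1..n}" and l: "l \<in> {1..n}" and kl: "k \<noteq> l"
    have st: "real k * \<delta> \<noteq> real l * \<delta>" using kl d by simp
    show "measure M {\<omega> \<in> space M. X (real k * \<delta>) \<omega> \<in> A \<and> X (real l * \<delta>) \<omega> \<in> A}
        \<le> (pA h x)\<^sup>2 + h ^ CARD('d) * BA h x \<bar>real l * \<delta> - real k * \<delta>\<bar>"
      using pair_bound[OF A_def h st] marginal_measure[OF h, of "real k * \<delta>" x] BAeq
      by (simp add: A_def)
  qed
  have hist: "hist_est X \<delta> h n \<omega> x = c * (\<Sum>k=1..n. indicator A (X (real k * \<delta>) \<omega>))" for \<omega>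
    by (simp add: hist_est_def c_def A_def)
  have lag: "(\<Sum>k\<in>{1..n}. \<Sum>l\<in>{1..n}-{k}. h ^ CARD('d) * BA h x \<bar>real l * \<delta> - real k * \<delta>\<bar>)
      \<le> h ^ CARD('d) * (2 * real n * (\<Sum>m=1..n. BA h x (real m * \<delta>)))"
  proof -
    have "(\<Sum>k\<in>{1..n}. \<Sum>l\<in>{1..n}-{k}. h ^ CARD('d) * BA h x \<bar>real l * \<delta> - real k * \<delta>\<bar>)
      = h ^ CARD('d) * (\<Sum>k\<in>{1..n}. \<Sum>l\<in>{1..n}-{k}. BA h x \<bar>real l * \<delta> - real k * \<delta>\<bar>)"
      by (simp add: sum_distrib_left)
    also have "\<dots> \<le> h ^ CARD('d) * (2 * real n * (\<Sum>m=1..n. BA h x (real m * \<delta>)))"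
      using h by (intro mult_left_mono lag_sum_bound[OF d]) (auto intro!: BA_nonneg simp: d)
    finally show ?thesis .
  qed
  have "(c * real n * pA h x - f x)\<^sup>2 + c\<^sup>2 * real n * pA h x
          + c\<^sup>2 * (\<Sum>k\<in>{1..n}. \<Sum>l\<in>{1..n}-{k}. h ^ CARD('d) * BA h x \<bar>real l * \<delta> - real k * \<delta>\<bar>)
     \<le> (c * real n * pA h x - f x)\<^sup>2 + c\<^sup>2 * real n * pA h x
          + c\<^sup>2 * (h ^ CARD('d) * (2 * real n * (\<Sum>m=1..n. BA h x (real m * \<delta>))))"
    using lag by (intro add_left_mono mult_left_mono) auto
  also have "\<dots> = (pA h x / h ^ CARD('d) - f x)\<^sup>2 + pA h x / (real n * h ^ CARD('d) * h ^ CARD('d))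
          + 2 / (real n * h ^ CARD('d)) * (\<Sum>m=1..n. BA h x (real m * \<delta>))"
    using h n by (simp add: c_def power2_eq_square field_simps)
  finally have le: "(c * real n * pA h x - f x)\<^sup>2 + c\<^sup>2 * real n * pA h x
          + c\<^sup>2 * (\<Sum>k\<in>{1..n}. \<Sum>l\<in>{1..n}-{k}. h ^ CARD('d) * BA h x \<bar>real l * \<delta> - real k * \<delta>\<bar>)
     \<le> (pA h x / h ^ CARD('d) - f x)\<^sup>2 + pA h x / (real n * h ^ CARD('d) * h ^ CARD('d))
          + 2 / (real n * h ^ CARD('d)) * (\<Sum>m=1..n. BA h x (real m * \<delta>))" .
  show ?thesis unfolding hist using order_trans[OF main ennreal_leI[OF le]] .
qed

end

lemma cellint_meas:
  fixes g :: "real ^ 'd::finite \<Rightarrow> real"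
  assumes h: "0 < h" and [measurable]: "g \<in> borel_measurable borel"
  shows "(\<lambda>x. \<integral> y. g y * indicator (hcube h (cell_index h x)) y \<partial>lborel) \<in> borel_measurable borel"
proof -
  have "(\<lambda>x. \<integral> y. g y * indicator (hcube h (cell_index h x)) y \<partial>lborel)
      = (\<lambda>x. \<integral> y. g y * (if cell_index h y = cell_index h x then 1 else 0) \<partial>lborel)"
    by (simp add: indicator_cell[OF h])
  also have "\<dots> \<in> borel_measurable borel"
    by (rule lborel.borel_measurable_lebesgue_integral) measurable
  finally show ?thesis .
qed

lemma cellint_integral:
  fixes g :: "real ^ 'd::finite \<Rightarrow> real"
  assumes h: "0 < h" and [measurable]: "g \<in> borel_measurable borel"
    and gi: "integrable lborel g" and g0: "\<And>y. 0 \<le> g y"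
  shows "(\<integral>\<^sup>+ x. ennreal (\<integral> y. g y * indicator (hcube h (cell_index h x)) y \<partial>lborel) \<partial>lborel)
       = ennreal (h ^ CARD('d)) * ennreal (\<integral> y. g y \<partial>lborel)"
proof -
  have "(\<integral>\<^sup>+ x. ennreal (\<integral> y. g y * indicator (hcube h (cell_index h x)) y \<partial>lborel) \<partial>lborel)
      = (\<integral>\<^sup>+ x. \<integral>\<^sup>+ y. indicator (hcube h (cell_index h x)) y * ennreal (g y) \<partial>lborel \<partial>lborel)"
  proof (rule nn_integral_cong)
    fix x
    have "ennreal (\<integral> y. g y * indicator (hcube h (cell_index h x)) y \<partial>lborel)
        = (\<integral>\<^sup>+ y. ennreal (g y) * indicator (hcube h (cell_index h x)) y \<partial>lborel)"
      by (rule nn_ind_eq[symmetric]) (auto intro: gi g0)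
    thus "ennreal (\<integral> y. g y * indicator (hcube h (cell_index h x)) y \<partial>lborel)
        = (\<integral>\<^sup>+ y. indicator (hcube h (cell_index h x)) y * ennreal (g y) \<partial>lborel)"
      by (simp add: mult.commute)
  qed
  also have "\<dots> = ennreal (h ^ CARD('d)) * (\<integral>\<^sup>+ y. ennreal (g y) \<partial>lborel)"
    by (rule cell_partition[OF h]) measurable
  also have "(\<integral>\<^sup>+ y. ennreal (g y) \<partial>lborel) = ennreal (\<integral> y. g y \<partial>lborel)"
    by (rule nn_integral_eq_integral[OF gi]) (simp add: g0)
  finally show ?thesis .
qed

context hsetting begin

lemma hist_meas:
  assumes h: "0 < h"
  shows "(\<lambda>p. ennreal ((hist_est X \<delta> h n (fst p) (snd p) - f (snd p))\<^sup>2)) \<in> borel_measurable (M \<Otimes>\<^sub>M lborel)"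
proof -
  have "(\<lambda>p. hist_est X \<delta> h n (fst p) (snd p)) = (\<lambda>p. (1 / (real n * h ^ CARD('d))) *
     (\<Sum>k=1..n. (if cell_index h (X (real k * \<delta>) (fst p)) = cell_index h (snd p) then 1 else 0)))"
    by (simp add: hist_est_def indicator_cell[OF h])
  moreover have "(\<lambda>p. (1 / (real n * h ^ CARD('d))) *
     (\<Sum>k=1..n. (if cell_index h (X (real k * \<delta>) (fst p)) = cell_index h (snd p) then 1 else 0)))
     \<in> borel_measurable (M \<Otimes>\<^sub>M lborel)" by measurable
  ultimately have [measurable]: "(\<lambda>p. hist_est X \<delta> h n (fst p) (snd p)) \<in> borel_measurable (M \<Otimes>\<^sub>M lborel)" by simp
  show ?thesis by measurable
qed

lemma pA_meas[measurable]: "0 < h \<Longrightarrow> pA h \<in> borel_measurable borel"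
  unfolding pA_def[abs_def] by (rule cellint_meas) auto
lemma PhiA_meas[measurable]: "0 < h \<Longrightarrow> PhiA h \<in> borel_measurable borel"
  unfolding PhiA_def[abs_def] by (rule cellint_meas) auto
lemma KA_meas[measurable]: "0 < h \<Longrightarrow> KA h \<in> borel_measurable borel"
  unfolding KA_def[abs_def] by (rule cellint_meas) auto

lemma pA_nonneg: "0 \<le> pA h x"
  unfolding pA_def by (rule integral_nonneg_AE) (auto intro!: AE_I2 mult_nonneg_nonneg f_nonneg)

lemma phi_int_nonneg: "0 \<le> (\<integral> y. \<phi> y \<partial>lborel)"
  by (rule integral_nonneg_AE) (auto intro!: AE_I2 less_imp_le[OF phi_pos])
lemma kk_int_nonneg: "0 \<le> (\<integral> y. kk y \<partial>lborel)"
  by (rule integral_nonneg_AE) (auto intro!: AE_I2 less_imp_le[OF kk_pos])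

definition VV :: "real \<Rightarrow> real" where
  "VV u = (if u \<le> u0 then u powr (- \<gamma>0) * (\<integral> y. \<phi> y \<partial>lborel) else \<pi> u * (\<integral> y. kk y \<partial>lborel))"

lemma BA_integral:
  assumes h: "0 < h" and u: "0 < u"
  shows "(\<integral>\<^sup>+ x. ennreal (BA h x u) \<partial>lborel) = ennreal (h ^ CARD('d)) * ennreal (VV u)"
proof (cases "u \<le> u0")
  case True
  have "(\<integral>\<^sup>+ x. ennreal (BA h x u) \<partial>lborel) = (\<integral>\<^sup>+ x. ennreal (u powr (- \<gamma>0)) * ennreal (PhiA h x) \<partial>lborel)"
    using True by (simp add: BA_def ennreal_mult')
  also have "\<dots> = ennreal (u powr (- \<gamma>0)) * (\<integral>\<^sup>+ x. ennreal (PhiA h x) \<partial>lborel)"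
    by (rule nn_integral_cmult) (use h in measurable)
  also have "(\<integral>\<^sup>+ x. ennreal (PhiA h x) \<partial>lborel) = ennreal (h ^ CARD('d)) * ennreal (\<integral> y. \<phi> y \<partial>lborel)"
    unfolding PhiA_def by (rule cellint_integral[OF h]) (auto intro: phi_int less_imp_le[OF phi_pos])
  finally show ?thesis using True phi_int_nonneg
    by (simp add: VV_def ennreal_mult' mult_ac)
next
  case False
  have "(\<integral>\<^sup>+ x. ennreal (BA h x u) \<partial>lborel) = (\<integral>\<^sup>+ x. ennreal (\<pi> u) * ennreal (KA h x) \<partial>lborel)"
    using False pi_nonneg[of u] by (simp add: BA_def ennreal_mult')
  also have "\<dots> = ennreal (\<pi> u) * (\<integral>\<^sup>+ x. ennreal (KA h x) \<partial>lborel)"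
    by (rule nn_integral_cmult) (use h in measurable)
  also have "(\<integral>\<^sup>+ x. ennreal (KA h x) \<partial>lborel) = ennreal (h ^ CARD('d)) * ennreal (\<integral> y. kk y \<partial>lborel)"
    unfolding KA_def by (rule cellint_integral[OF h]) (auto intro: kk_int less_imp_le[OF kk_pos])
  finally show ?thesis using False pi_nonneg[of u] kk_int_nonneg
    by (simp add: VV_def ennreal_mult' mult_ac)
qed

lemma MISE_bound:
  assumes h: "0 < h" and d: "0 < \<delta>" and n: "0 < n"
  shows "MISE M X f \<delta> h n \<le> (\<integral>\<^sup>+ x. ennreal ((pA h x / h ^ CARD('d) - f x)\<^sup>2) \<partial>lborel)
      + ennreal (1 / (real n * h ^ CARD('d))) + ennreal (2 / real n * (\<Sum>m=1..n. VV (real m * \<delta>)))"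
proof -
  interpret prob_space M by (rule prob)
  interpret P: pair_sigma_finite M lborel ..
  note hm = hist_meas[OF h, of \<delta> n]
  have "MISE M X f \<delta> h n = (\<integral>\<^sup>+ \<omega>. \<integral>\<^sup>+ x. ennreal ((hist_est X \<delta> h n \<omega> x - f x)\<^sup>2) \<partial>lborel \<partial>M)"
    by (simp add: MISE_def)
  also have "\<dots> = (\<integral>\<^sup>+ x. \<integral>\<^sup>+ \<omega>. ennreal ((hist_est X \<delta> h n \<omega> x - f x)\<^sup>2) \<partial>M \<partial>lborel)"
    using P.Fubini'[of "\<lambda>\<omega> x. ennreal ((hist_est X \<delta> h n \<omega> x - f x)\<^sup>2)"] hm
    by (simp add: case_prod_beta')
  also have "\<dots> \<le> (\<integral>\<^sup>+ x. ennreal ((pA h x / h ^ CARD('d) - f x)\<^sup>2) + ennreal (pA h x / (real n * h ^ CARD('d) * h ^ CARD('d)))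
          + ennreal (2 / (real n * h ^ CARD('d))) * (\<Sum>m=1..n. ennreal (BA h x (real m * \<delta>))) \<partial>lborel)"
  proof (rule nn_integral_mono)
    fix x
    have s0: "0 \<le> (\<Sum>m=1..n. BA h x (real m * \<delta>))" by (rule sum_nonneg) (auto intro!: BA_nonneg simp: d)
    have "ennreal ((pA h x / h ^ CARD('d) - f x)\<^sup>2 + pA h x / (real n * h ^ CARD('d) * h ^ CARD('d))
          + 2 / (real n * h ^ CARD('d)) * (\<Sum>m=1..n. BA h x (real m * \<delta>)))
        = ennreal ((pA h x / h ^ CARD('d) - f x)\<^sup>2) + ennreal (pA h x / (real n * h ^ CARD('d) * h ^ CARD('d)))
          + ennreal (2 / (real n * h ^ CARD('d))) * (\<Sum>m=1..n. ennreal (BA h x (real m * \<delta>)))"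
    proof -
      have a: "0 \<le> pA h x / (real n * h ^ CARD('d) * h ^ CARD('d))" using h pA_nonneg[of h x] by simp
      have b: "0 \<le> 2 / (real n * h ^ CARD('d)) * (\<Sum>m=1..n. BA h x (real m * \<delta>))" using h s0 by simp
      have "ennreal (2 / (real n * h ^ CARD('d)) * (\<Sum>m=1..n. BA h x (real m * \<delta>)))
          = ennreal (2 / (real n * h ^ CARD('d))) * ennreal (\<Sum>m=1..n. BA h x (real m * \<delta>))"
        using h by (intro ennreal_mult') simp
      also have "ennreal (\<Sum>m=1..n. BA h x (real m * \<delta>)) = (\<Sum>m=1..n. ennreal (BA h x (real m * \<delta>)))"
        by (rule sum_ennreal[symmetric]) (auto intro!: BA_nonneg simp: d)
      finally have c: "ennreal (2 / (real n * h ^ CARD('d)) * (\<Sum>m=1..n. BA h x (real m * \<delta>)))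
          = ennreal (2 / (real n * h ^ CARD('d))) * (\<Sum>m=1..n. ennreal (BA h x (real m * \<delta>)))" .
      have "ennreal ((pA h x / h ^ CARD('d) - f x)\<^sup>2 + pA h x / (real n * h ^ CARD('d) * h ^ CARD('d))
          + 2 / (real n * h ^ CARD('d)) * (\<Sum>m=1..n. BA h x (real m * \<delta>)))
        = ennreal ((pA h x / h ^ CARD('d) - f x)\<^sup>2) + ennreal (pA h x / (real n * h ^ CARD('d) * h ^ CARD('d)))
          + ennreal (2 / (real n * h ^ CARD('d)) * (\<Sum>m=1..n. BA h x (real m * \<delta>)))"
        using a b by (simp only: ennreal_plus add_nonneg_nonneg zero_le_power2)
      thus ?thesis using c by simp
    qed
    thus "(\<integral>\<^sup>+ \<omega>. ennreal ((hist_est X \<delta> h n \<omega> x - f x)\<^sup>2) \<partial>M) \<le> \<dots>"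
      using pointwise_bound[OF h d n, of x] by simp
  qed
  also have "\<dots> = (\<integral>\<^sup>+ x. ennreal ((pA h x / h ^ CARD('d) - f x)\<^sup>2) \<partial>lborel)
        + (\<integral>\<^sup>+ x. ennreal (pA h x / (real n * h ^ CARD('d) * h ^ CARD('d))) \<partial>lborel)
        + (\<integral>\<^sup>+ x. ennreal (2 / (real n * h ^ CARD('d))) * (\<Sum>m=1..n. ennreal (BA h x (real m * \<delta>))) \<partial>lborel)"
  proof -
    note [measurable] = pA_meas[OF h] PhiA_meas[OF h] KA_meas[OF h]
    have [measurable]: "(\<lambda>x. BA h x u) \<in> borel_measurable borel" for u
      unfolding BA_def by measurable
    have e1: "(\<integral>\<^sup>+ x. ennreal ((pA h x / h ^ CARD('d) - f x)\<^sup>2) + ennreal (pA h x / (real n * h ^ CARD('d) * h ^ CARD('d)))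
          + ennreal (2 / (real n * h ^ CARD('d))) * (\<Sum>m=1..n. ennreal (BA h x (real m * \<delta>))) \<partial>lborel)
       = (\<integral>\<^sup>+ x. ennreal ((pA h x / h ^ CARD('d) - f x)\<^sup>2) + ennreal (pA h x / (real n * h ^ CARD('d) * h ^ CARD('d))) \<partial>lborel)
        + (\<integral>\<^sup>+ x. ennreal (2 / (real n * h ^ CARD('d))) * (\<Sum>m=1..n. ennreal (BA h x (real m * \<delta>))) \<partial>lborel)"
      by (rule nn_integral_add) measurable
    have e2: "(\<integral>\<^sup>+ x. ennreal ((pA h x / h ^ CARD('d) - f x)\<^sup>2) + ennreal (pA h x / (real n * h ^ CARD('d) * h ^ CARD('d))) \<partial>lborel)
      = (\<integral>\<^sup>+ x. ennreal ((pA h x / h ^ CARD('d) - f x)\<^sup>2) \<partial>lborel) + (\<integral>\<^sup>+ x. ennreal (pA h x / (real n * h ^ CARD('d) * h ^ CARD('d))) \<partial>lborel)"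
      by (rule nn_integral_add) measurable
    show ?thesis using e1 e2 by simp
  qed
  also have "(\<integral>\<^sup>+ x. ennreal (pA h x / (real n * h ^ CARD('d) * h ^ CARD('d))) \<partial>lborel)
      = ennreal (1 / (real n * h ^ CARD('d) * h ^ CARD('d))) * (\<integral>\<^sup>+ x. ennreal (pA h x) \<partial>lborel)"
    using h pA_nonneg by (subst nn_integral_cmult[symmetric]) (auto simp: ennreal_mult'[symmetric])
  also have "(\<integral>\<^sup>+ x. ennreal (pA h x) \<partial>lborel) = ennreal (h ^ CARD('d)) * ennreal (\<integral> y. f y \<partial>lborel)"
    unfolding pA_def by (rule cellint_integral[OF h]) (auto intro: f_int f_nonneg)
  also have "(\<integral> y. f y \<partial>lborel) = 1"
  proof -
    interpret prob_space M by (rule prob)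
    have "(\<integral>\<^sup>+ y. ennreal (f y) \<partial>lborel) = emeasure M {\<omega>\<in>space M. X 0 \<omega> \<in> UNIV}"
      using marginal[of UNIV 0] by simp
    also have "\<dots> = 1" by (simp add: emeasure_space_1)
    finally have e1: "(\<integral>\<^sup>+ y. ennreal (f y) \<partial>lborel) = 1" .
    have e2: "(\<integral>\<^sup>+ y. ennreal (f y) \<partial>lborel) = ennreal (\<integral> y. f y \<partial>lborel)"
      by (rule nn_integral_eq_integral[OF f_int]) (simp add: f_nonneg)
    have "0 \<le> (\<integral> y. f y \<partial>lborel)" by (rule integral_nonneg_AE) (auto simp: f_nonneg)
    thus ?thesis using e1 e2 by simp
  qed
  also have "(\<integral>\<^sup>+ x. ennreal (2 / (real n * h ^ CARD('d))) * (\<Sum>m=1..n. ennreal (BA h x (real m * \<delta>))) \<partial>lborel)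
      = ennreal (2 / (real n * h ^ CARD('d))) * (\<Sum>m=1..n. \<integral>\<^sup>+ x. ennreal (BA h x (real m * \<delta>)) \<partial>lborel)"
  proof -
    note [measurable] = pA_meas[OF h] PhiA_meas[OF h] KA_meas[OF h]
    have [measurable]: "(\<lambda>x. BA h x u) \<in> borel_measurable borel" for u
      unfolding BA_def by measurable
    have "(\<integral>\<^sup>+ x. ennreal (2 / (real n * h ^ CARD('d))) * (\<Sum>m=1..n. ennreal (BA h x (real m * \<delta>))) \<partial>lborel)
      = ennreal (2 / (real n * h ^ CARD('d))) * (\<integral>\<^sup>+ x. (\<Sum>m=1..n. ennreal (BA h x (real m * \<delta>))) \<partial>lborel)"
      by (rule nn_integral_cmult) measurable
    also have "(\<integral>\<^sup>+ x. (\<Sum>m=1..n. ennreal (BA h x (real m * \<delta>))) \<partial>lborel)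
       = (\<Sum>m=1..n. \<integral>\<^sup>+ x. ennreal (BA h x (real m * \<delta>)) \<partial>lborel)"
      by (rule nn_integral_sum) measurable
    finally show ?thesis .
  qed
  also have "(\<Sum>m=1..n. \<integral>\<^sup>+ x. ennreal (BA h x (real m * \<delta>)) \<partial>lborel)
     = (\<Sum>m=1..n. ennreal (h ^ CARD('d)) * ennreal (VV (real m * \<delta>)))"
    by (rule sum.cong[OF refl], rule BA_integral[OF h]) (use d in auto)
  finally have le: "MISE M X f \<delta> h n \<le> (\<integral>\<^sup>+ x. ennreal ((pA h x / h ^ CARD('d) - f x)\<^sup>2) \<partial>lborel)
      + ennreal (1 / (real n * h ^ CARD('d) * h ^ CARD('d))) * (ennreal (h ^ CARD('d)) * ennreal 1)
      + ennreal (2 / (real n * h ^ CARD('d))) * (\<Sum>m=1..n. ennreal (h ^ CARD('d)) * ennreal (VV (real m * \<delta>)))" .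
  have V0: "0 \<le> VV (real m * \<delta>)" if "1 \<le> m" for m
    using pi_nonneg[of "real m * \<delta>"] that d
      integral_nonneg_AE[of "\<lambda>y. \<phi> y" lborel] integral_nonneg_AE[of "\<lambda>y. kk y" lborel] phi_pos kk_pos
    by (auto simp: VV_def less_imp_le intro!: mult_nonneg_nonneg)
  have e2: "ennreal (1 / (real n * h ^ CARD('d) * h ^ CARD('d))) * (ennreal (h ^ CARD('d)) * ennreal 1)
     = ennreal (1 / (real n * h ^ CARD('d)))"
    using h n by (simp add: ennreal_mult'[symmetric] field_simps)
  have e3: "ennreal (2 / (real n * h ^ CARD('d))) * (\<Sum>m=1..n. ennreal (h ^ CARD('d)) * ennreal (VV (real m * \<delta>)))
     = ennreal (2 / real n * (\<Sum>m=1..n. VV (real m * \<delta>)))"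
  proof -
    have "(\<Sum>m=1..n. ennreal (h ^ CARD('d)) * ennreal (VV (real m * \<delta>))) = ennreal (\<Sum>m=1..n. h ^ CARD('d) * VV (real m * \<delta>))"
      using h V0 by (subst sum_ennreal[symmetric]) (auto simp: ennreal_mult'[symmetric])
    thus ?thesis using h n V0
      by (simp add: ennreal_mult'[symmetric] sum_distrib_left[symmetric] sum_nonneg field_simps)
  qed
  show ?thesis using le e2 e3 by simp
qed

end

locale hsetting2 = hsetting M X f fu \<gamma>0 u0 \<phi> kk \<pi>
  for M :: "'a measure" and X :: "real \<Rightarrow> 'a \<Rightarrow> real ^ 'd::finite" and f fu \<gamma>0 u0 \<phi> kk \<pi> +
  fixes Df :: "'d \<Rightarrow> real ^ 'd \<Rightarrow> real" and U u1 Bp :: real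
  assumes deriv: "\<And>x. (f has_derivative (\<lambda>v. \<Sum>i\<in>UNIV. Df i x * v $ i)) (at x)"
    and Df_cont: "\<And>i. continuous_on UNIV (Df i)"
    and Df_int: "\<And>i. integrable lborel (\<lambda>x. (Df i x)\<^sup>2)"
    and pi_bd: "\<And>u. \<bar>\<pi> u\<bar> \<le> Bp"
    and pi_mono: "\<And>a b. U \<le> a \<Longrightarrow> a \<le> b \<Longrightarrow> \<pi> b \<le> \<pi> a"
    and u01: "u0 < u1"
    and pi_int: "integrable lborel (\<lambda>s. indicator {u1..} s * \<pi> s)"
begin

definition "Cb = real CARD('d) * 2 ^ CARD('d) * (\<integral> z. (\<Sum>i\<in>UNIV. (Df i z)\<^sup>2) \<partial>lborel)"
definition "WW = max U u1"
definition "JJ = (\<integral> s. indicator {WW..} s * \<pi> s \<partial>lborel)"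
definition "C2 = (\<integral> y. kk y \<partial>lborel) * (Bp * (WW + 1) + JJ)"

lemma Gr_int: "integrable lborel (\<lambda>z. \<Sum>i\<in>UNIV. (Df i z)\<^sup>2)"
  using Df_int by auto

lemma Cb_nonneg: "0 \<le> Cb"
  unfolding Cb_def by (intro mult_nonneg_nonneg integral_nonneg_AE) (auto intro!: AE_I2 sum_nonneg)

lemma bias:
  assumes h: "0 < h"
  shows "(\<integral>\<^sup>+ x. ennreal ((pA h x / h ^ CARD('d) - f x)\<^sup>2) \<partial>lborel) \<le> ennreal (Cb * h\<^sup>2)"
proof -
  have "(\<integral>\<^sup>+ x. ennreal ((pA h x / h ^ CARD('d) - f x)\<^sup>2) \<partial>lborel)
     \<le> ennreal (real CARD('d) * h\<^sup>2) * ennreal (2 ^ CARD('d)) * (\<integral>\<^sup>+ z. ennreal (\<Sum>i\<in>UNIV. (Df i z)\<^sup>2) \<partial>lborel)"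
    unfolding pA_def by (rule bias_bound[OF f_int deriv Df_cont h])
  also have "(\<integral>\<^sup>+ z. ennreal (\<Sum>i\<in>UNIV. (Df i z)\<^sup>2) \<partial>lborel) = ennreal (\<integral> z. (\<Sum>i\<in>UNIV. (Df i z)\<^sup>2) \<partial>lborel)"
    by (rule nn_integral_eq_integral[OF Gr_int]) (auto intro!: sum_nonneg)
  also have "ennreal (real CARD('d) * h\<^sup>2) * ennreal (2 ^ CARD('d)) * ennreal (\<integral> z. (\<Sum>i\<in>UNIV. (Df i z)\<^sup>2) \<partial>lborel)
      = ennreal (Cb * h\<^sup>2)"
  proof -
    have "0 \<le> (\<integral> z. (\<Sum>i\<in>UNIV. (Df i z)\<^sup>2) \<partial>lborel)" by (intro integral_nonneg_AE) (auto intro!: AE_I2 sum_nonneg)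
    thus ?thesis by (simp add: Cb_def ennreal_mult'[symmetric] mult_ac)
  qed
  finally show ?thesis .
qed

lemma pi_sum:
  assumes d: "0 < \<delta>" "\<delta> \<le> 1"
  shows "(\<Sum>m\<in>{m\<in>{1..n::nat}. u0 < real m * \<delta>}. \<pi> (real m * \<delta>)) \<le> (Bp * (WW + 1) + JJ) / \<delta>"
proof -
  have W: "u1 \<le> WW" "U \<le> WW" "u0 < WW" using u01 by (auto simp: WW_def)
  have Bp0: "0 \<le> Bp" using pi_bd[of 0] by simp
  define Sa where "Sa = {m\<in>{1..n::nat}. u0 < real m * \<delta> \<and> real m * \<delta> \<le> WW + \<delta>}"
  define Sb where "Sb = {m\<in>{1..n::nat}. WW + \<delta> < real m * \<delta>}"
  have split: "{m\<in>{1..n::nat}. u0 < real m * \<delta>} = Sa \<union> Sb"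
    using W d by (auto simp: Sa_def Sb_def)
  have "(\<Sum>m\<in>{m\<in>{1..n::nat}. u0 < real m * \<delta>}. \<pi> (real m * \<delta>)) = (\<Sum>m\<in>Sa. \<pi> (real m * \<delta>)) + (\<Sum>m\<in>Sb. \<pi> (real m * \<delta>))"
    unfolding split by (rule sum.union_disjoint) (auto simp: Sa_def Sb_def)
  also have "(\<Sum>m\<in>Sa. \<pi> (real m * \<delta>)) \<le> (\<Sum>m\<in>Sa. Bp)"
    by (rule sum_mono) (use pi_bd in \<open>auto simp: abs_le_iff\<close>)
  also have "(\<Sum>m\<in>Sa. Bp) = real (card Sa) * Bp" by simp
  also have "real (card Sa) \<le> (WW + \<delta>) / \<delta>"
  proof -
    have "Sa \<subseteq> {m\<in>{1..n::nat}. real m \<le> (WW + \<delta>) / \<delta>}" using d by (auto simp: Sa_def le_divide_eq)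
    hence "card Sa \<le> card {m\<in>{1..n::nat}. real m \<le> (WW + \<delta>) / \<delta>}" by (intro card_mono) auto
    moreover have "real (card {m\<in>{1..n::nat}. real m \<le> (WW + \<delta>) / \<delta>}) \<le> (WW + \<delta>) / \<delta>"
      by (rule card_le_real) (use W d u0_pos in auto)
    ultimately show ?thesis by linarith
  qed
  hence "real (card Sa) * Bp \<le> (WW + \<delta>) / \<delta> * Bp" using Bp0 by (rule mult_right_mono)
  also have "(\<Sum>m\<in>Sb. \<pi> (real m * \<delta>)) \<le> JJ / \<delta>"
  proof -
    have Gi: "integrable lborel (\<lambda>s. indicator {WW..} s * \<pi> s)"
    proof -
      have "integrable lborel (\<lambda>s. indicator {WW..} s *\<^sub>R (indicator {u1..} s * \<pi> s))"
        by (rule integrable_mult_indicator[OF _ pi_int]) simp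
      moreover have "(\<lambda>s. indicator {WW..} s *\<^sub>R (indicator {u1..} s * \<pi> s)) = (\<lambda>s. indicator {WW..} s * \<pi> s)"
        using W by (auto simp: indicator_def fun_eq_iff)
      ultimately show ?thesis by simp
    qed
    have "\<delta> * (\<Sum>m\<in>Sb. \<pi> (real m * \<delta>)) \<le> JJ" unfolding Sb_def JJ_def
      by (rule pi_tail_sum[OF d(1) _ _ Gi]) (use W pi_mono pi_nonneg in \<open>auto\<close>)
    thus ?thesis using d by (simp add: le_divide_eq mult.commute)
  qed
  also have "(WW + \<delta>) / \<delta> * Bp + JJ / \<delta> \<le> (Bp * (WW + 1) + JJ) / \<delta>"
    using d Bp0 by (simp add: divide_simps mult_left_mono algebra_simps)
  finally show ?thesis by simp
qed


lemma VV_sum: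
  assumes d: "0 < \<delta>" "\<delta> \<le> 1"
  shows "(\<Sum>m=1..n. VV (real m * \<delta>)) \<le> (\<integral> y. \<phi> y \<partial>lborel) * \<delta> powr (- \<gamma>0) *
      (\<Sum>m\<in>{m\<in>{1..n::nat}. real m * \<delta> \<le> u0}. real m powr (- \<gamma>0)) + C2 / \<delta>"
proof -
  have "(\<Sum>m=1..n. VV (real m * \<delta>)) = (\<Sum>m\<in>{1..n} \<inter> {m. real m * \<delta> \<le> u0}. (real m * \<delta>) powr (- \<gamma>0) * (\<integral> y. \<phi> y \<partial>lborel))
      + (\<Sum>m\<in>{1..n} \<inter> - {m. real m * \<delta> \<le> u0}. \<pi> (real m * \<delta>) * (\<integral> y. kk y \<partial>lborel))"
    unfolding VV_def by (rule sum.If_cases) simp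
  also have "(\<Sum>m\<in>{1..n} \<inter> {m. real m * \<delta> \<le> u0}. (real m * \<delta>) powr (- \<gamma>0) * (\<integral> y. \<phi> y \<partial>lborel))
     = (\<integral> y. \<phi> y \<partial>lborel) * \<delta> powr (- \<gamma>0) * (\<Sum>m\<in>{m\<in>{1..n::nat}. real m * \<delta> \<le> u0}. real m powr (- \<gamma>0))"
    using d by (auto simp: sum_distrib_left powr_mult intro!: sum.cong)
  also have "(\<Sum>m\<in>{1..n} \<inter> - {m. real m * \<delta> \<le> u0}. \<pi> (real m * \<delta>) * (\<integral> y. kk y \<partial>lborel))
     = (\<integral> y. kk y \<partial>lborel) * (\<Sum>m\<in>{m\<in>{1..n::nat}. u0 < real m * \<delta>}. \<pi> (real m * \<delta>))"
    by (auto simp: sum_distrib_left intro!: sum.cong)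
  also have "\<dots> \<le> (\<integral> y. kk y \<partial>lborel) * ((Bp * (WW + 1) + JJ) / \<delta>)"
    by (rule mult_left_mono[OF pi_sum[OF d] kk_int_nonneg])
  also have "\<dots> = C2 / \<delta>" by (simp add: C2_def)
  finally show ?thesis by simp
qed

lemma gen_bound:
  assumes n: "0 < n" and h: "0 < h" and d: "0 < \<delta>" "\<delta> \<le> 1"
  shows "MISE M X f \<delta> h n \<le> ennreal (Cb * h\<^sup>2 + 1 / (real n * h ^ CARD('d)) + 2 / real n *
      ((\<integral> y. \<phi> y \<partial>lborel) * \<delta> powr (- \<gamma>0) * (\<Sum>m\<in>{m\<in>{1..n::nat}. real m * \<delta> \<le> u0}. real m powr (- \<gamma>0)) + C2 / \<delta>))"
proof -
  have V0: "0 \<le> (\<Sum>m=1..n. VV (real m * \<delta>))"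
    using pi_nonneg d phi_int_nonneg kk_int_nonneg
    by (intro sum_nonneg) (auto simp: VV_def intro!: mult_nonneg_nonneg)
  have "MISE M X f \<delta> h n \<le> (\<integral>\<^sup>+ x. ennreal ((pA h x / h ^ CARD('d) - f x)\<^sup>2) \<partial>lborel)
      + ennreal (1 / (real n * h ^ CARD('d))) + ennreal (2 / real n * (\<Sum>m=1..n. VV (real m * \<delta>)))"
    by (rule MISE_bound[OF h d(1) n])
  also have "\<dots> \<le> ennreal (Cb * h\<^sup>2) + ennreal (1 / (real n * h ^ CARD('d))) + ennreal (2 / real n *
      ((\<integral> y. \<phi> y \<partial>lborel) * \<delta> powr (- \<gamma>0) * (\<Sum>m\<in>{m\<in>{1..n::nat}. real m * \<delta> \<le> u0}. real m powr (- \<gamma>0)) + C2 / \<delta>))"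
    using n by (intro add_mono bias[OF h] order.refl ennreal_leI mult_left_mono VV_sum[OF d]) auto
  also have "\<dots> = ennreal (Cb * h\<^sup>2 + 1 / (real n * h ^ CARD('d)) + 2 / real n *
      ((\<integral> y. \<phi> y \<partial>lborel) * \<delta> powr (- \<gamma>0) * (\<Sum>m\<in>{m\<in>{1..n::nat}. real m * \<delta> \<le> u0}. real m powr (- \<gamma>0)) + C2 / \<delta>))"
  proof -
    have "0 \<le> 2 / real n * (\<Sum>m=1..n. VV (real m * \<delta>))" using V0 by simp
    also have "2 / real n * (\<Sum>m=1..n. VV (real m * \<delta>)) \<le> 2 / real n *
      ((\<integral> y. \<phi> y \<partial>lborel) * \<delta> powr (- \<gamma>0) * (\<Sum>m\<in>{m\<in>{1..n::nat}. real m * \<delta> \<le> u0}. real m powr (- \<gamma>0)) + C2 / \<delta>)"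
      using n by (intro mult_left_mono VV_sum[OF d]) auto
    finally have a: "0 \<le> 2 / real n *
      ((\<integral> y. \<phi> y \<partial>lborel) * \<delta> powr (- \<gamma>0) * (\<Sum>m\<in>{m\<in>{1..n::nat}. real m * \<delta> \<le> u0}. real m powr (- \<gamma>0)) + C2 / \<delta>)" .
    have b: "0 \<le> Cb * h\<^sup>2" using Cb_nonneg by simp
    have c: "0 \<le> 1 / (real n * h ^ CARD('d))" using h by simp
    show ?thesis using a b c by (simp add: ennreal_plus[symmetric] del: ennreal_plus)
  qed
  finally show ?thesis .
qed

end

lemma hpowD:
  fixes c :: real and n :: nat and D :: nat
  assumes n: "0 < n" and c: "0 < c"
  shows "(c * real n powr (- 1 / (real D + 2))) ^ D = c ^ D * real n powr (- real D / (real D + 2))"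
  using n by (simp add: power_mult_distrib powr_power)

lemma hpow2:
  fixes c :: real and n :: nat and D :: nat
  assumes n: "0 < n" and c: "0 < c"
  shows "(c * real n powr (- 1 / (real D + 2)))\<^sup>2 = c\<^sup>2 * real n powr (- 2 / (real D + 2))"
  using n by (simp add: power_mult_distrib powr_power)

lemma hident:
  fixes c :: real and n :: nat and D :: nat
  assumes n: "0 < n" and c: "0 < c"
  shows "real n * (c * real n powr (- 1 / (real D + 2))) ^ D * (c * real n powr (- 1 / (real D + 2)))\<^sup>2 = c ^ (D + 2)"
proof -
  have "real n * (c * real n powr (- 1 / (real D + 2))) ^ D * (c * real n powr (- 1 / (real D + 2)))\<^sup>2
      = c ^ D * c\<^sup>2 * (real n powr 1 * real n powr (- real D / (real D + 2)) * real n powr (- 2 / (real D + 2)))"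
    unfolding hpowD[OF n c] hpow2[OF n c] by (simp add: mult_ac)
  also have "real n powr 1 * real n powr (- real D / (real D + 2)) * real n powr (- 2 / (real D + 2))
      = real n powr (1 + (- real D / (real D + 2)) + (- 2 / (real D + 2)))"
    by (simp only: powr_add)
  also have "1 + (- real D / (real D + 2)) + (- 2 / (real D + 2)) = 0"
    by (simp add: field_simps)
  finally show ?thesis using n by (simp add: power_add power2_eq_square)
qed

lemma nhD:
  fixes c :: real and n :: nat and D :: nat
  assumes n: "0 < n" and c: "0 < c"
  shows "real n * (c * real n powr (- 1 / (real D + 2))) ^ D = c ^ D * real n powr (2 / (real D + 2))"
proof -
  have "real n * (c * real n powr (- 1 / (real D + 2))) ^ D = c ^ D * (real n powr 1 * real n powr (- real D / (real D + 2)))"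
    unfolding hpowD[OF n c] using n by (simp add: mult_ac)
  also have "real n powr 1 * real n powr (- real D / (real D + 2)) = real n powr (1 + (- real D / (real D + 2)))"
    by (simp only: powr_add)
  also have "1 + (- real D / (real D + 2)) = 2 / (real D + 2)" by (simp add: field_simps)
  finally show ?thesis .
qed

lemma P_sub:
  fixes \<delta> u0 g :: real
  assumes d: "0 < \<delta>" and u: "0 < u0"
  shows "(\<Sum>m\<in>{m\<in>{1..n::nat}. real m * \<delta> \<le> u0}. real m powr (- g)) \<le> (\<Sum>m=1..nat \<lfloor>u0 / \<delta>\<rfloor>. real m powr (- g))"
proof (rule sum_mono2)
  show "{m\<in>{1..n::nat}. real m * \<delta> \<le> u0} \<subseteq> {1..nat \<lfloor>u0 / \<delta>\<rfloor>}"
    using d by (auto simp: le_nat_floor le_divide_eq)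
qed auto

lemma P_case1:
  fixes \<delta> u0 g :: real
  assumes d: "0 < \<delta>" and u: "0 < u0" and g: "0 < g" "g < 1"
  shows "(\<Sum>m\<in>{m\<in>{1..n::nat}. real m * \<delta> \<le> u0}. real m powr (- g)) \<le> (u0 / \<delta>) powr (1 - g) / (1 - g)"
proof -
  define N where "N = nat \<lfloor>u0 / \<delta>\<rfloor>"
  have NN: "real N \<le> u0 / \<delta>" using d u by (simp add: N_def)
  have "(\<Sum>m=1..N. real m powr (- g)) \<le> (u0 / \<delta>) powr (1 - g) / (1 - g)"
  proof (cases "1 \<le> N")
    case True
    have "(\<Sum>m=1..N. real m powr (- g)) \<le> 1 + (real N powr (1 - g) - 1) / (1 - g)"
      using psum_bound[of g N] g True by simp
    also have "\<dots> \<le> real N powr (1 - g) / (1 - g)"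
      using g by (simp add: field_simps)
    also have "\<dots> \<le> (u0 / \<delta>) powr (1 - g) / (1 - g)"
      using g NN by (intro divide_right_mono powr_mono2) auto
    finally show ?thesis .
  next
    case False
    hence "N = 0" by simp
    thus ?thesis using g by simp
  qed
  thus ?thesis using P_sub[OF d u, where n=n and g=g] unfolding N_def by linarith
qed

lemma P_case2:
  fixes \<delta> u0 :: real
  assumes d: "0 < \<delta>" and u: "\<delta> \<le> u0"
  shows "(\<Sum>m\<in>{m\<in>{1..n::nat}. real m * \<delta> \<le> u0}. real m powr (- 1)) \<le> 1 + ln (u0 / \<delta>)"
proof -
  have u0: "0 < u0" using d u by simp
  define N where "N = nat \<lfloor>u0 / \<delta>\<rfloor>"
  have NN: "real N \<le> u0 / \<delta>" using d u by (simp add: N_def)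
  have N1: "1 \<le> N" using d u by (simp add: N_def le_nat_floor le_divide_eq)
  have "(\<Sum>m=1..N. real m powr (- 1)) = (\<Sum>m=1..N. 1 / real m)"
    by (rule sum.cong) (auto simp: powr_minus_divide)
  also have "\<dots> \<le> 1 + ln (real N)" by (rule lnsum_bound[OF N1])
  also have "\<dots> \<le> 1 + ln (u0 / \<delta>)" using N1 NN by simp
  finally show ?thesis using P_sub[OF d u0, where n=n and g=1] unfolding N_def by linarith
qed

lemma P_case3:
  fixes \<delta> u0 g :: real
  assumes d: "0 < \<delta>" and u: "0 < u0" and g: "1 < g"
  shows "(\<Sum>m\<in>{m\<in>{1..n::nat}. real m * \<delta> \<le> u0}. real m powr (- g)) \<le> g / (g - 1)"
proof -
  define N where "N = nat \<lfloor>u0 / \<delta>\<rfloor>"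
  have "(\<Sum>m=1..N. real m powr (- g)) \<le> g / (g - 1)"
  proof (cases "1 \<le> N")
    case True
    have "(\<Sum>m=1..N. real m powr (- g)) \<le> 1 + (real N powr (1 - g) - 1) / (1 - g)"
      using psum_bound[of g N] g True by simp
    also have "\<dots> = 1 + (1 - real N powr (1 - g)) / (g - 1)"
      using g by (simp add: field_simps)
    also have "\<dots> \<le> 1 + 1 / (g - 1)"
      using g by (intro add_left_mono divide_right_mono) auto
    also have "\<dots> = g / (g - 1)" using g by (simp add: field_simps)
    finally show ?thesis .
  next
    case False
    hence "N = 0" by simp
    thus ?thesis using g by simp
  qed
  thus ?thesis using P_sub[OF d u, where n=n and g=g] unfolding N_def by linarith
qed

context hsetting2 begin

lemma Phi_nonneg': "0 \<le> (\<integral> y. \<phi> y \<partial>lborel)" by (rule phi_int_nonneg)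
lemma C2_nonneg: "0 \<le> C2"
proof -
  have "0 \<le> JJ" unfolding JJ_def using pi_nonneg u01
    by (intro integral_nonneg_AE) (auto intro!: AE_I2 simp: indicator_def WW_def)
  moreover have "0 \<le> Bp" using pi_bd[of 0] by simp
  moreover have "0 \<le> WW + 1" using u01 u0_pos by (simp add: WW_def)
  ultimately show ?thesis unfolding C2_def by (intro mult_nonneg_nonneg kk_int_nonneg) auto
qed

lemma case1:
  fixes c d1 :: real
  defines "h \<equiv> \<lambda>n::nat. c * real n powr (- 1 / (real CARD('d) + 2))"
  defines "\<delta> \<equiv> \<lambda>n. d1 * h n ^ CARD('d)"
  assumes g: "\<gamma>0 < 1" "0 < \<gamma>0" and c: "0 < c" and d1: "0 < d1" and lim: "\<delta> \<longlonglongrightarrow> 0"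
  shows "\<exists>C. \<forall>\<^sub>F n in sequentially. MISE M X f (\<delta> n) (h n) n \<le> ennreal (C / (real n * \<delta> n))"
proof -
  define \<Phi> where "\<Phi> = (\<integral> y. \<phi> y \<partial>lborel)"
  define C where "C = Cb * d1 * c ^ (CARD('d) + 2) + d1 + 2 * \<Phi> * u0 powr (1 - \<gamma>0) / (1 - \<gamma>0) + 2 * C2"
  have e1: "\<forall>\<^sub>F n in sequentially. 0 < n" by (rule eventually_gt_at_top)
  have e2: "\<forall>\<^sub>F n in sequentially. \<delta> n < 1" using lim by (rule order_tendstoD) simp
  have ev: "\<forall>\<^sub>F n in sequentially. 0 < n \<and> \<delta> n \<le> 1"
    using e1 e2 by eventually_elim auto
  show ?thesis
  proof (intro exI[of _ C], use ev in eventually_elim, clarify)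
    fix n :: nat assume n: "0 < n" and d_le: "\<delta> n \<le> 1"
    have hpos: "0 < h n" using n c by (simp add: h_def)
    have dpos: "0 < \<delta> n" using hpos d1 by (simp add: \<delta>_def)
    define T where "T = real n * \<delta> n"
    have Tpos: "0 < T" using n dpos by (simp add: T_def)
    have ident: "real n * h n ^ CARD('d) * (h n)\<^sup>2 = c ^ (CARD('d) + 2)"
      unfolding h_def by (rule hident[OF n c])
    have t1: "Cb * (h n)\<^sup>2 = Cb * d1 * c ^ (CARD('d) + 2) / T"
    proof -
      have "(h n)\<^sup>2 = c ^ (CARD('d) + 2) / (real n * h n ^ CARD('d))"
        using ident hpos n by (simp add: field_simps)
      thus ?thesis using d1 by (simp add: T_def \<delta>_def field_simps)
    qed
    have t2: "1 / (real n * h n ^ CARD('d)) = d1 / T"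
      using d1 by (simp add: T_def \<delta>_def field_simps)
    have P: "(\<Sum>m\<in>{m\<in>{1..n::nat}. real m * \<delta> n \<le> u0}. real m powr (- \<gamma>0)) \<le> (u0 / \<delta> n) powr (1 - \<gamma>0) / (1 - \<gamma>0)"
      by (rule P_case1[OF dpos u0_pos g(2,1)])
    have pw: "\<delta> n powr (- \<gamma>0) * (u0 / \<delta> n) powr (1 - \<gamma>0) = u0 powr (1 - \<gamma>0) / \<delta> n"
    proof -
      have "\<delta> n powr (- \<gamma>0) * (u0 / \<delta> n) powr (1 - \<gamma>0) = u0 powr (1 - \<gamma>0) * (\<delta> n powr (- \<gamma>0) / \<delta> n powr (1 - \<gamma>0))"
        using dpos u0_pos by (simp add: powr_divide)
      also have "\<delta> n powr (- \<gamma>0) / \<delta> n powr (1 - \<gamma>0) = \<delta> n powr (- \<gamma>0 - (1 - \<gamma>0))"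
        by (rule powr_diff[symmetric])
      also have "- \<gamma>0 - (1 - \<gamma>0) = - 1" by simp
      also have "\<delta> n powr (- 1) = 1 / \<delta> n" using dpos by (subst powr_minus_divide) simp
      finally show ?thesis by simp
    qed
    have t3: "2 / real n * (\<Phi> * \<delta> n powr (- \<gamma>0) * (\<Sum>m\<in>{m\<in>{1..n::nat}. real m * \<delta> n \<le> u0}. real m powr (- \<gamma>0)) + C2 / \<delta> n)
        \<le> (2 * \<Phi> * u0 powr (1 - \<gamma>0) / (1 - \<gamma>0) + 2 * C2) / T"
    proof -
      have "\<Phi> * \<delta> n powr (- \<gamma>0) * (\<Sum>m\<in>{m\<in>{1..n::nat}. real m * \<delta> n \<le> u0}. real m powr (- \<gamma>0))
          \<le> \<Phi> * \<delta> n powr (- \<gamma>0) * ((u0 / \<delta> n) powr (1 - \<gamma>0) / (1 - \<gamma>0))"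
        using P Phi_nonneg' by (intro mult_left_mono) (auto simp: \<Phi>_def)
      also have "\<dots> = \<Phi> * u0 powr (1 - \<gamma>0) / (1 - \<gamma>0) / \<delta> n"
        using pw by (simp add: field_simps)
      finally have a: "\<Phi> * \<delta> n powr (- \<gamma>0) * (\<Sum>m\<in>{m\<in>{1..n::nat}. real m * \<delta> n \<le> u0}. real m powr (- \<gamma>0))
          \<le> \<Phi> * u0 powr (1 - \<gamma>0) / (1 - \<gamma>0) / \<delta> n" .
      have "2 / real n * (\<Phi> * \<delta> n powr (- \<gamma>0) * (\<Sum>m\<in>{m\<in>{1..n::nat}. real m * \<delta> n \<le> u0}. real m powr (- \<gamma>0)) + C2 / \<delta> n)
          \<le> 2 / real n * (\<Phi> * u0 powr (1 - \<gamma>0) / (1 - \<gamma>0) / \<delta> n + C2 / \<delta> n)"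
        using a n by (intro mult_left_mono add_right_mono) auto
      also have "\<dots> = (2 * \<Phi> * u0 powr (1 - \<gamma>0) / (1 - \<gamma>0) + 2 * C2) / T"
        using n dpos g by (simp add: T_def field_simps)
      finally show ?thesis .
    qed
    have "MISE M X f (\<delta> n) (h n) n \<le> ennreal (Cb * (h n)\<^sup>2 + 1 / (real n * h n ^ CARD('d)) + 2 / real n *
      ((\<integral> y. \<phi> y \<partial>lborel) * \<delta> n powr (- \<gamma>0) * (\<Sum>m\<in>{m\<in>{1..n::nat}. real m * \<delta> n \<le> u0}. real m powr (- \<gamma>0)) + C2 / \<delta> n))"
      by (rule gen_bound[OF n hpos dpos d_le])
    also have "\<dots> \<le> ennreal (C / T)"
    proof (rule ennreal_leI)
      have "Cb * (h n)\<^sup>2 + 1 / (real n * h n ^ CARD('d)) + 2 / real n *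
          (\<Phi> * \<delta> n powr (- \<gamma>0) * (\<Sum>m\<in>{m\<in>{1..n::nat}. real m * \<delta> n \<le> u0}. real m powr (- \<gamma>0)) + C2 / \<delta> n)
          \<le> Cb * d1 * c ^ (CARD('d) + 2) / T + d1 / T + (2 * \<Phi> * u0 powr (1 - \<gamma>0) / (1 - \<gamma>0) + 2 * C2) / T"
        using t1 t2 t3 by linarith
      also have "\<dots> = C / T" by (simp add: C_def add_divide_distrib)
      finally show "Cb * (h n)\<^sup>2 + 1 / (real n * h n ^ CARD('d)) + 2 / real n *
          ((\<integral> y. \<phi> y \<partial>lborel) * \<delta> n powr (- \<gamma>0) * (\<Sum>m\<in>{m\<in>{1..n::nat}. real m * \<delta> n \<le> u0}. real m powr (- \<gamma>0)) + C2 / \<delta> n)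
          \<le> C / T" by (simp add: \<Phi>_def)
    qed
    finally show "MISE M X f (\<delta> n) (h n) n \<le> ennreal (C / (real n * \<delta> n))" by (simp add: T_def)
  qed
qed

end

lemma aux_abs: "0 \<le> (a::real) \<Longrightarrow> x - a * k \<le> x + a * \<bar>k\<bar>"
proof -
  assume "0 \<le> a"
  hence "a * (- k) \<le> a * \<bar>k\<bar>" by (intro mult_left_mono) auto
  thus ?thesis by simp
qed

lemma le_mult_ge1: "0 \<le> (a::real) \<Longrightarrow> 1 \<le> t \<Longrightarrow> a \<le> a * t"
  using mult_left_mono[of 1 t a] by simp

context hsetting2 begin

lemma case2:
  fixes c d2 :: real
  defines "h \<equiv> \<lambda>n::nat. c * real n powr (- 1 / (real CARD('d) + 2))"
  defines "\<delta> \<equiv> \<lambda>n. d2 * h n ^ CARD('d) * ln (1 / h n ^ CARD('d))"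
  defines "T \<equiv> \<lambda>n. real n * \<delta> n"
  assumes g: "\<gamma>0 = 1" and c: "0 < c" and d2: "0 < d2" and lim: "\<delta> \<longlonglongrightarrow> 0"
    and Tlim: "filterlim T at_top sequentially"
  shows "\<exists>C. \<forall>\<^sub>F n in sequentially. MISE M X f (\<delta> n) (h n) n \<le> ennreal (C * ln (T n) / T n)"
proof -
  define dr where "dr = real CARD('d)"
  define D where "D = CARD('d)"
  have dr1: "1 \<le> dr" by (simp add: dr_def)
  define \<Phi> where "\<Phi> = (\<integral> y. \<phi> y \<partial>lborel)"
  have \<Phi>0: "0 \<le> \<Phi>" using Phi_nonneg' by (simp add: \<Phi>_def)
  define A1 where "A1 = (Cb * c ^ (D + 2) + 1) * d2"
  have A10: "0 \<le> A1" using Cb_nonneg c d2 by (simp add: A1_def)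
  define B where "B = (dr / 2) * \<bar>((dr + 2) / dr) * dr * ln c + ln d2\<bar>"
  have B0: "0 \<le> B" using dr1 by (simp add: B_def)
  define C where "C = (A1 + 2 * \<Phi>) * (dr / 2 + B) + 2 * \<Phi> * (1 + \<bar>ln u0\<bar> + \<bar>ln d2\<bar>) + 2 * C2"
  have h0: "h \<longlonglongrightarrow> 0"
  proof -
    have "(\<lambda>n. real n powr (- 1 / (real CARD('d) + 2))) \<longlonglongrightarrow> 0"
      by (rule tendsto_neg_powr[OF _ filterlim_real_sequentially]) (simp add: divide_neg_pos add_pos_pos)
    from tendsto_mult_right_zero[OF this, of c] show ?thesis by (simp add: h_def)
  qed
  have hD0: "(\<lambda>n. h n ^ CARD('d)) \<longlonglongrightarrow> 0"
    using h0 by simp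
  have ev1: "\<forall>\<^sub>F n in sequentially. 0 < n" by (rule eventually_gt_at_top)
  have ev2: "\<forall>\<^sub>F n in sequentially. \<delta> n < min 1 u0" using lim by (rule order_tendstoD) (simp add: u0_pos)
  have ev3: "\<forall>\<^sub>F n in sequentially. exp 1 \<le> T n" using Tlim by (simp add: filterlim_at_top)
  have ev4: "\<forall>\<^sub>F n in sequentially. h n ^ CARD('d) < exp (- 1)" using hD0 by (rule order_tendstoD) simp
  have ev: "\<forall>\<^sub>F n in sequentially. 0 < n \<and> \<delta> n \<le> 1 \<and> \<delta> n \<le> u0 \<and> exp 1 \<le> T n \<and> h n ^ CARD('d) < exp (- 1)"
    using ev1 ev2 ev3 ev4 by eventually_elim auto
  show ?thesis
  proof (intro exI[of _ C], use ev in eventually_elim, clarify)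
    fix n :: nat assume n: "0 < n" and d_le: "\<delta> n \<le> 1" and du: "\<delta> n \<le> u0" and T1: "exp 1 \<le> T n"
      and hsmall: "h n ^ CARD('d) < exp (- 1)"
    have hpos: "0 < h n" using n c by (simp add: h_def)
    have hDpos: "0 < h n ^ CARD('d)" using hpos by simp
    define L where "L = ln (1 / h n ^ CARD('d))"
    have L1: "1 < L"
    proof -
      have "ln (h n ^ CARD('d)) < ln (exp (- 1))" using hsmall hDpos by (subst ln_less_cancel_iff) auto
      hence "ln (h n ^ CARD('d)) < - 1" by simp
      thus ?thesis using hDpos hpos by (simp add: L_def ln_div)
    qed
    have dpos: "0 < \<delta> n" proof - have "\<delta> n = d2 * h n ^ CARD('d) * L" by (simp add: \<delta>_def L_def) thus ?thesis using hDpos d2 L1 by simp qed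
    have Tpos: "0 < T n" using n dpos by (simp add: T_def)
    have lnT1: "1 \<le> ln (T n)" using T1 Tpos by (simp add: ln_ge_iff)
    have lnhD: "ln (h n ^ CARD('d)) = dr * ln c + (- dr / (dr + 2)) * ln (real n)"
    proof -
      have "h n ^ CARD('d) = c ^ CARD('d) * real n powr (- real CARD('d) / (real CARD('d) + 2))"
        unfolding h_def by (rule hpowD[OF n c])
      hence "ln (h n ^ CARD('d)) = ln (c ^ CARD('d)) + ln (real n powr (- dr / (dr + 2)))"
        using c n by (simp add: ln_mult dr_def)
      also have "\<dots> = dr * ln c + (- dr / (dr + 2)) * ln (real n)"
        using c by (simp add: ln_realpow ln_powr dr_def)
      finally show ?thesis .
    qed
    have Leq: "L = - ln (h n ^ CARD('d))" using hDpos hpos by (simp add: L_def ln_div)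
    have lnd: "ln (\<delta> n) = ln d2 - L + ln L"
    proof -
      have "\<delta> n = d2 * h n ^ CARD('d) * L" by (simp add: \<delta>_def L_def)
      hence "ln (\<delta> n) = ln d2 + ln (h n ^ CARD('d)) + ln L" using d2 hDpos hpos L1 by (simp add: ln_mult)
      thus ?thesis using Leq by simp
    qed
    have lnTeq: "ln (T n) = ln (real n) + ln (\<delta> n)" using n dpos by (simp add: T_def ln_mult)
    have lnL0: "0 \<le> ln L" using L1 by simp
    have Lb: "L \<le> (dr / 2 + B) * ln (T n)"
    proof -
      have lnn: "ln (real n) = ((dr + 2) / dr) * (L + dr * ln c)"
      proof -
        have p: "0 < dr * dr + dr * 2" using dr1 by (simp add: add_pos_pos)
        show ?thesis using dr1 p unfolding Leq lnhD by (simp add: field_simps)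
      qed
      have "ln (T n) \<ge> (2 / dr) * L + (((dr + 2) / dr) * dr * ln c + ln d2)"
        using lnL0 dr1 unfolding lnTeq lnd lnn by (simp add: field_simps)
      hence i: "(dr / 2) * ((2 / dr) * L + (((dr + 2) / dr) * dr * ln c + ln d2)) \<le> (dr / 2) * ln (T n)"
        using dr1 by (intro mult_left_mono) auto
      have e: "(dr / 2) * ((2 / dr) * L + (((dr + 2) / dr) * dr * ln c + ln d2)) = L + (dr / 2) * (((dr + 2) / dr) * dr * ln c + ln d2)"
        using dr1 by (simp add: field_simps)
      have "L \<le> (dr / 2) * ln (T n) - (dr / 2) * (((dr + 2) / dr) * dr * ln c + ln d2)"
        using i e by linarith
      also have "\<dots> \<le> (dr / 2) * ln (T n) + B"
        unfolding B_def by (rule aux_abs) (use dr1 in simp)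
      also have "\<dots> \<le> (dr / 2) * ln (T n) + B * ln (T n)"
        using le_mult_ge1[OF B0 lnT1] by simp
      finally show ?thesis by (simp add: algebra_simps)
    qed
    have mlnd: "- ln (\<delta> n) \<le> L + \<bar>ln d2\<bar>" using lnL0 unfolding lnd by simp
    have P: "(\<Sum>m\<in>{m\<in>{1..n::nat}. real m * \<delta> n \<le> u0}. real m powr (- 1)) \<le> 1 + ln (u0 / \<delta> n)"
      by (rule P_case2[OF dpos du])
    have lnud: "ln (u0 / \<delta> n) = ln u0 - ln (\<delta> n)" using u0_pos dpos by (simp add: ln_div)
    have ident: "real n * h n ^ CARD('d) * (h n)\<^sup>2 = c ^ (CARD('d) + 2)"
      unfolding h_def by (rule hident[OF n c])
    have Teq2: "T n = real n * h n ^ CARD('d) * d2 * L" by (simp add: T_def \<delta>_def L_def mult_ac)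
    have t1: "Cb * (h n)\<^sup>2 + 1 / (real n * h n ^ CARD('d)) = (Cb * c ^ (D + 2) + 1) * d2 * L / T n"
    proof -
      have "(h n)\<^sup>2 = c ^ (CARD('d) + 2) / (real n * h n ^ CARD('d))"
        using ident hpos n by (simp add: field_simps)
      thus ?thesis using d2 L1 n hpos by (simp add: Teq2 D_def field_simps)
    qed
    have t3: "2 / real n * (\<Phi> * \<delta> n powr (- \<gamma>0) * (\<Sum>m\<in>{m\<in>{1..n::nat}. real m * \<delta> n \<le> u0}. real m powr (- \<gamma>0)) + C2 / \<delta> n)
        \<le> (2 * \<Phi> * (1 + ln u0 - ln (\<delta> n)) + 2 * C2) / T n"
    proof -
      have pw: "\<delta> n powr (- \<gamma>0) = 1 / \<delta> n" using dpos g by (simp add: powr_minus_divide)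
      have P': "(\<Sum>m\<in>{m\<in>{1..n::nat}. real m * \<delta> n \<le> u0}. real m powr (- \<gamma>0)) \<le> 1 + ln (u0 / \<delta> n)"
        using P g by simp
      have a: "\<Phi> * \<delta> n powr (- \<gamma>0) * (\<Sum>m\<in>{m\<in>{1..n::nat}. real m * \<delta> n \<le> u0}. real m powr (- \<gamma>0))
          \<le> \<Phi> * (1 / \<delta> n) * (1 + ln (u0 / \<delta> n))"
        unfolding pw using P' \<Phi>0 dpos by (intro mult_left_mono) auto
      have "2 / real n * (\<Phi> * \<delta> n powr (- \<gamma>0) * (\<Sum>m\<in>{m\<in>{1..n::nat}. real m * \<delta> n \<le> u0}. real m powr (- \<gamma>0)) + C2 / \<delta> n)
          \<le> 2 / real n * (\<Phi> * (1 / \<delta> n) * (1 + ln (u0 / \<delta> n)) + C2 / \<delta> n)"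
        using a n by (intro mult_left_mono[OF add_right_mono]) auto
      also have "\<dots> = (2 * \<Phi> * (1 + ln u0 - ln (\<delta> n)) + 2 * C2) / T n"
        using n dpos by (simp add: T_def lnud field_simps)
      finally show ?thesis .
    qed
    have "MISE M X f (\<delta> n) (h n) n \<le> ennreal (Cb * (h n)\<^sup>2 + 1 / (real n * h n ^ CARD('d)) + 2 / real n *
      ((\<integral> y. \<phi> y \<partial>lborel) * \<delta> n powr (- \<gamma>0) * (\<Sum>m\<in>{m\<in>{1..n::nat}. real m * \<delta> n \<le> u0}. real m powr (- \<gamma>0)) + C2 / \<delta> n))"
      by (rule gen_bound[OF n hpos dpos d_le])
    also have "\<dots> \<le> ennreal (C * ln (T n) / T n)"
    proof (rule ennreal_leI)
      have "Cb * (h n)\<^sup>2 + 1 / (real n * h n ^ CARD('d)) + 2 / real n *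
          (\<Phi> * \<delta> n powr (- \<gamma>0) * (\<Sum>m\<in>{m\<in>{1..n::nat}. real m * \<delta> n \<le> u0}. real m powr (- \<gamma>0)) + C2 / \<delta> n)
          \<le> (A1 * L + (2 * \<Phi> * (1 + ln u0 - ln (\<delta> n)) + 2 * C2)) / T n"
        using t1 t3 by (simp add: A1_def add_divide_distrib)
      also have "\<dots> \<le> C * ln (T n) / T n"
      proof (rule divide_right_mono[OF _ less_imp_le[OF Tpos]])
        have "A1 * L \<le> A1 * ((dr / 2 + B) * ln (T n))" using Lb A10 by (rule mult_left_mono)
        moreover have "2 * \<Phi> * (1 + ln u0 - ln (\<delta> n)) \<le> 2 * \<Phi> * ((dr / 2 + B) * ln (T n) + (1 + \<bar>ln u0\<bar> + \<bar>ln d2\<bar>) * ln (T n))"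
        proof (rule mult_left_mono)
          have "1 + ln u0 - ln (\<delta> n) \<le> L + (1 + \<bar>ln u0\<bar> + \<bar>ln d2\<bar>)" using mlnd by linarith
          also have "\<dots> \<le> (dr / 2 + B) * ln (T n) + (1 + \<bar>ln u0\<bar> + \<bar>ln d2\<bar>) * ln (T n)"
            by (intro add_mono Lb le_mult_ge1[OF _ lnT1]) auto
          finally show "1 + ln u0 - ln (\<delta> n) \<le> (dr / 2 + B) * ln (T n) + (1 + \<bar>ln u0\<bar> + \<bar>ln d2\<bar>) * ln (T n)" .
        qed (use \<Phi>0 in simp)
        moreover have "2 * C2 \<le> 2 * C2 * ln (T n)" using le_mult_ge1[OF _ lnT1, of "2 * C2"] C2_nonneg by simp
        ultimately show "A1 * L + (2 * \<Phi> * (1 + ln u0 - ln (\<delta> n)) + 2 * C2) \<le> C * ln (T n)"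
          by (simp add: C_def algebra_simps)
      qed
      finally show "Cb * (h n)\<^sup>2 + 1 / (real n * h n ^ CARD('d)) + 2 / real n *
          ((\<integral> y. \<phi> y \<partial>lborel) * \<delta> n powr (- \<gamma>0) * (\<Sum>m\<in>{m\<in>{1..n::nat}. real m * \<delta> n \<le> u0}. real m powr (- \<gamma>0)) + C2 / \<delta> n)
          \<le> C * ln (T n) / T n" by (simp add: \<Phi>_def)
    qed
    finally show "MISE M X f (\<delta> n) (h n) n \<le> ennreal (C * ln (T n) / T n)" .
  qed
qed

end

context hsetting2 begin

lemma case3:
  fixes c d3 :: real
  defines "h \<equiv> \<lambda>n::nat. c * real n powr (- 1 / (real CARD('d) + 2))"
  defines "\<delta> \<equiv> \<lambda>n. d3 * h n powr (real CARD('d) / \<gamma>0)"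
  defines "T \<equiv> \<lambda>n. real n * \<delta> n"
  assumes g: "1 < \<gamma>0" and c: "0 < c" and d3: "0 < d3" and lim: "\<delta> \<longlonglongrightarrow> 0"
    and Tlim: "filterlim T at_top sequentially"
  shows "\<exists>C. \<forall>\<^sub>F n in sequentially. MISE M X f (\<delta> n) (h n) n
              \<le> ennreal (C * T n powr (- (2 * \<gamma>0 / (2 * \<gamma>0 + real CARD('d) * (\<gamma>0 - 1)))))"
proof -
  define dr where "dr = real CARD('d)"
  define e where "e = 2 * \<gamma>0 / (2 * \<gamma>0 + dr * (\<gamma>0 - 1))"
  have dr1: "1 \<le> dr" by (simp add: dr_def)
  have den: "0 < 2 * \<gamma>0 + dr * (\<gamma>0 - 1)" using g dr1 by (simp add: add_pos_nonneg)
  have e0: "0 < e" using g den by (simp add: e_def)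
  have e1: "e \<le> 1" using g den dr1 by (simp add: e_def divide_le_eq_1)
  define \<Phi> where "\<Phi> = (\<integral> y. \<phi> y \<partial>lborel)"
  define K0 where "K0 = (d3 * c powr (dr / \<gamma>0)) powr (- e)"
  have K0: "0 < K0" using d3 c by (simp add: K0_def)
  define C where "C = (Cb * c ^ (CARD('d) + 2) + 1 + 2 * \<Phi> * (\<gamma>0 / (\<gamma>0 - 1)) * d3 powr (- \<gamma>0)) / (c ^ CARD('d) * K0) + 2 * C2"
  have ev1: "\<forall>\<^sub>F n in sequentially. 0 < n" by (rule eventually_gt_at_top)
  have ev2: "\<forall>\<^sub>F n in sequentially. \<delta> n < 1" using lim by (rule order_tendstoD) simp
  have ev3: "\<forall>\<^sub>F n in sequentially. 1 \<le> T n" using Tlim by (simp add: filterlim_at_top)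
  have ev: "\<forall>\<^sub>F n in sequentially. 0 < n \<and> \<delta> n \<le> 1 \<and> 1 \<le> T n"
    using ev1 ev2 ev3 by eventually_elim auto
  show ?thesis unfolding dr_def[symmetric] e_def[symmetric]
  proof (intro exI[of _ C], use ev in eventually_elim, clarify)
    fix n :: nat assume n: "0 < n" and d_le: "\<delta> n \<le> 1" and T1: "1 \<le> T n"
    have hpos: "0 < h n" using n c by (simp add: h_def)
    have dpos: "0 < \<delta> n" using hpos d3 by (simp add: \<delta>_def)
    have ident: "real n * h n ^ CARD('d) * (h n)\<^sup>2 = c ^ (CARD('d) + 2)"
      unfolding h_def by (rule hident[OF n c])
    have nh: "real n * h n ^ CARD('d) = c ^ CARD('d) * real n powr (2 / (dr + 2))"
      unfolding h_def dr_def by (rule nhD[OF n c])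
    have hp: "h n powr (dr / \<gamma>0) = c powr (dr / \<gamma>0) * real n powr (- 1 / (dr + 2) * (dr / \<gamma>0))"
      using c n by (simp add: h_def dr_def powr_mult powr_powr)
    have Teq: "T n = (d3 * c powr (dr / \<gamma>0)) * real n powr (1 + (- 1 / (dr + 2) * (dr / \<gamma>0)))"
    proof -
      have "T n = d3 * c powr (dr / \<gamma>0) * (real n powr 1 * real n powr (- 1 / (dr + 2) * (dr / \<gamma>0)))"
        using n by (simp add: T_def \<delta>_def dr_def[symmetric] hp mult_ac)
      also have "real n powr 1 * real n powr (- 1 / (dr + 2) * (dr / \<gamma>0)) = real n powr (1 + (- 1 / (dr + 2) * (dr / \<gamma>0)))"
        by (simp only: powr_add)
      finally show ?thesis .
    qed
    have expo: "(1 + (- 1 / (dr + 2) * (dr / \<gamma>0))) * - e = - 2 / (dr + 2)"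
    proof -
      have p: "0 < (dr + 2) * \<gamma>0" using g dr1 by simp
      hence nz: "\<gamma>0 * dr + \<gamma>0 * 2 \<noteq> 0" "(dr + 2) * \<gamma>0 \<noteq> 0" by (auto simp: algebra_simps)
      have a: "1 + (- 1 / (dr + 2) * (dr / \<gamma>0)) = (2 * \<gamma>0 + dr * (\<gamma>0 - 1)) / ((dr + 2) * \<gamma>0)"
        using g dr1 nz by (simp add: field_simps)
      have "(2 * \<gamma>0 + dr * (\<gamma>0 - 1)) / ((dr + 2) * \<gamma>0) * - (2 * \<gamma>0 / (2 * \<gamma>0 + dr * (\<gamma>0 - 1))) = - 2 / (dr + 2)"
        using g dr1 den by (simp add: divide_simps)
      thus ?thesis unfolding e_def a .
    qed
    have TP: "T n powr (- e) = K0 * real n powr (- 2 / (dr + 2))"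
    proof -
      have "T n powr (- e) = (d3 * c powr (dr / \<gamma>0)) powr (- e) * (real n powr (1 + (- 1 / (dr + 2) * (dr / \<gamma>0)))) powr (- e)"
        unfolding Teq using d3 c by (simp add: powr_mult)
      also have "(real n powr (1 + (- 1 / (dr + 2) * (dr / \<gamma>0)))) powr (- e) = real n powr (- 2 / (dr + 2))"
        unfolding powr_powr expo by (rule refl)
      finally show ?thesis by (simp add: K0_def)
    qed
    have inv_nh: "1 / (real n * h n ^ CARD('d)) = T n powr (- e) / (c ^ CARD('d) * K0)"
    proof -
      have "1 / (real n * h n ^ CARD('d)) = real n powr (- 2 / (dr + 2)) / c ^ CARD('d)"
        unfolding nh using n c by (simp add: powr_minus_divide divide_simps)
      also have "\<dots> = T n powr (- e) / (c ^ CARD('d) * K0)" using K0 by (simp add: TP)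
      finally show ?thesis .
    qed
    have dpow: "\<delta> n powr (- \<gamma>0) = d3 powr (- \<gamma>0) / h n ^ CARD('d)"
    proof -
      have "\<delta> n powr (- \<gamma>0) = d3 powr (- \<gamma>0) * h n powr (dr / \<gamma>0 * - \<gamma>0)"
        using d3 hpos by (simp add: \<delta>_def dr_def[symmetric] powr_mult powr_powr)
      also have "dr / \<gamma>0 * - \<gamma>0 = - dr" using g by simp
      also have "h n powr (- dr) = 1 / h n ^ CARD('d)"
        using hpos by (simp add: powr_minus_divide dr_def powr_realpow)
      finally show ?thesis by simp
    qed
    have P: "(\<Sum>m\<in>{m\<in>{1..n::nat}. real m * \<delta> n \<le> u0}. real m powr (- \<gamma>0)) \<le> \<gamma>0 / (\<gamma>0 - 1)"
      by (rule P_case3[OF dpos u0_pos g])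
    have TT: "1 / T n \<le> T n powr (- e)"
    proof -
      have "T n powr (- 1) \<le> T n powr (- e)" using T1 e1 by (intro powr_mono) auto
      thus ?thesis using T1 by (simp add: powr_minus_divide)
    qed
    define R where "R = T n powr (- e)"
    have R0: "0 \<le> R" by (simp add: R_def)
    have t1: "Cb * (h n)\<^sup>2 = Cb * c ^ (CARD('d) + 2) * (1 / (real n * h n ^ CARD('d)))"
    proof -
      have "(h n)\<^sup>2 = c ^ (CARD('d) + 2) / (real n * h n ^ CARD('d))"
        using ident hpos n by (simp add: field_simps)
      thus ?thesis by simp
    qed
    have t3: "2 / real n * (\<Phi> * \<delta> n powr (- \<gamma>0) * (\<Sum>m\<in>{m\<in>{1..n::nat}. real m * \<delta> n \<le> u0}. real m powr (- \<gamma>0)) + C2 / \<delta> n)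
        \<le> 2 * \<Phi> * (\<gamma>0 / (\<gamma>0 - 1)) * d3 powr (- \<gamma>0) * (1 / (real n * h n ^ CARD('d))) + 2 * C2 * (1 / T n)"
    proof -
      have "\<Phi> * \<delta> n powr (- \<gamma>0) * (\<Sum>m\<in>{m\<in>{1..n::nat}. real m * \<delta> n \<le> u0}. real m powr (- \<gamma>0))
          \<le> \<Phi> * \<delta> n powr (- \<gamma>0) * (\<gamma>0 / (\<gamma>0 - 1))"
        using P Phi_nonneg' by (intro mult_left_mono) (auto simp: \<Phi>_def)
      hence "2 / real n * (\<Phi> * \<delta> n powr (- \<gamma>0) * (\<Sum>m\<in>{m\<in>{1..n::nat}. real m * \<delta> n \<le> u0}. real m powr (- \<gamma>0)) + C2 / \<delta> n)
          \<le> 2 / real n * (\<Phi> * \<delta> n powr (- \<gamma>0) * (\<gamma>0 / (\<gamma>0 - 1)) + C2 / \<delta> n)"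
        using n by (intro mult_left_mono[OF add_right_mono]) auto
      also have "\<dots> = 2 * \<Phi> * (\<gamma>0 / (\<gamma>0 - 1)) * d3 powr (- \<gamma>0) * (1 / (real n * h n ^ CARD('d))) + 2 * C2 * (1 / T n)"
        using n dpos hpos g by (simp add: dpow T_def field_simps)
      finally show ?thesis .
    qed
    have A: "0 \<le> Cb * c ^ (CARD('d) + 2) + 1 + 2 * \<Phi> * (\<gamma>0 / (\<gamma>0 - 1)) * d3 powr (- \<gamma>0)"
      using Cb_nonneg c g Phi_nonneg' by (auto simp: \<Phi>_def intro!: add_nonneg_nonneg mult_nonneg_nonneg)
    have "MISE M X f (\<delta> n) (h n) n \<le> ennreal (Cb * (h n)\<^sup>2 + 1 / (real n * h n ^ CARD('d)) + 2 / real n *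
      ((\<integral> y. \<phi> y \<partial>lborel) * \<delta> n powr (- \<gamma>0) * (\<Sum>m\<in>{m\<in>{1..n::nat}. real m * \<delta> n \<le> u0}. real m powr (- \<gamma>0)) + C2 / \<delta> n))"
      by (rule gen_bound[OF n hpos dpos d_le])
    also have "\<dots> \<le> ennreal (C * R)"
    proof (rule ennreal_leI)
      have "Cb * (h n)\<^sup>2 + 1 / (real n * h n ^ CARD('d)) + 2 / real n *
          (\<Phi> * \<delta> n powr (- \<gamma>0) * (\<Sum>m\<in>{m\<in>{1..n::nat}. real m * \<delta> n \<le> u0}. real m powr (- \<gamma>0)) + C2 / \<delta> n)
          \<le> (Cb * c ^ (CARD('d) + 2) + 1 + 2 * \<Phi> * (\<gamma>0 / (\<gamma>0 - 1)) * d3 powr (- \<gamma>0)) * (1 / (real n * h n ^ CARD('d)))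
             + 2 * C2 * (1 / T n)"
        using t1 t3 by (simp add: algebra_simps)
      also have "\<dots> \<le> (Cb * c ^ (CARD('d) + 2) + 1 + 2 * \<Phi> * (\<gamma>0 / (\<gamma>0 - 1)) * d3 powr (- \<gamma>0)) * (R / (c ^ CARD('d) * K0))
             + 2 * C2 * R"
        using TT C2_nonneg A by (intro add_mono mult_left_mono order.refl) (auto simp: inv_nh R_def)
      also have "\<dots> = C * R" using c K0 by (simp add: C_def field_simps)
      finally show "Cb * (h n)\<^sup>2 + 1 / (real n * h n ^ CARD('d)) + 2 / real n *
          ((\<integral> y. \<phi> y \<partial>lborel) * \<delta> n powr (- \<gamma>0) * (\<Sum>m\<in>{m\<in>{1..n::nat}. real m * \<delta> n \<le> u0}. real m powr (- \<gamma>0)) + C2 / \<delta> n)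
          \<le> C * R" by (simp add: \<Phi>_def)
    qed
    finally show "MISE M X f (\<delta> n) (h n) n \<le> ennreal (C * T n powr (- e))" by (simp add: R_def)
  qed
qed

end

theorem corollary1:
  fixes M :: "'a measure"
    and X :: "real \<Rightarrow> 'a \<Rightarrow> real ^ 'd::finite"
    and f :: "real ^ 'd \<Rightarrow> real"
    and fu :: "real \<Rightarrow> real ^ 'd \<Rightarrow> real ^ 'd \<Rightarrow> real"
    and \<gamma>0 u0 c :: real
  assumes prob: "prob_space M"
    and meas: "(\<lambda>p. X (fst p) (snd p)) \<in> borel_measurable (lborel \<Otimes>\<^sub>M M)"
    and f_nonneg: "\<And>x. 0 \<le> f x"
    and dens: "\<And>t. distributed M lborel (X t) (\<lambda>x. ennreal (f x))"
    and fu_nonneg: "\<And>u y z. 0 < u \<Longrightarrow> 0 \<le> fu u y z"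
    and joint: "\<And>s t. s \<noteq> t \<Longrightarrow>
        distributed M (lborel \<Otimes>\<^sub>M lborel) (\<lambda>\<omega>. (X s \<omega>, X t \<omega>))
          (\<lambda>p. ennreal (fu \<bar>t - s\<bar> (fst p) (snd p)))"
    \<comment> \<open>A0 (i): f is C^2, first and second order partial derivatives square integrable\<close>
    and A0_i: "\<exists>Df D2f.
        (\<forall>x. (f has_derivative (\<lambda>v. \<Sum>i\<in>UNIV. Df i x * v $ i)) (at x)) \<and>
        (\<forall>i x. (Df i has_derivative (\<lambda>v. \<Sum>j\<in>UNIV. D2f i j x * v $ j)) (at x)) \<and>
        (\<forall>i j. continuous_on UNIV (D2f i j)) \<and>
        (\<forall>i. integrable lborel (\<lambda>x. (Df i x)\<^sup>2)) \<and>
        (\<forall>i j. integrable lborel (\<lambda>x. (D2f i j x)\<^sup>2))"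
    \<comment> \<open>A0 (ii)\<close>
    and A0_ii: "continuous_on UNIV f" "bounded (range f)"
    \<comment> \<open>A1' (i)\<close>
    and \<gamma>0_pos: "0 < \<gamma>0" and u0_pos: "0 < u0"
    and A1_i: "\<exists>\<phi> :: real ^ 'd \<Rightarrow> real. (\<forall>y. 0 < \<phi> y) \<and> continuous_on UNIV \<phi> \<and> integrable lborel \<phi> \<and>
        (\<forall>y u z. 0 < u \<longrightarrow> u \<le> u0 \<longrightarrow> fu u y z \<le> \<phi> y * u powr (- \<gamma>0))"
    \<comment> \<open>A1' (ii)\<close>
    and A1_ii: "\<exists>(k :: real ^ 'd \<Rightarrow> real) (\<pi> :: real \<Rightarrow> real) u1.
        (\<forall>y. 0 < k y) \<and> continuous_on UNIV k \<and> integrable lborel k \<and>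
        bounded (range \<pi>) \<and> (\<exists>U. \<forall>a b. U \<le> a \<longrightarrow> a \<le> b \<longrightarrow> \<pi> b \<le> \<pi> a) \<and>
        u0 < u1 \<and> set_integrable lborel {u1..} \<pi> \<and>
        (\<forall>y u z. u0 \<le> u \<longrightarrow> \<bar>fu u y z - f y * f z\<bar> \<le> k y * \<pi> u)"
    and c_pos: "0 < c"
  shows
    "let d = real CARD('d);
         h = (\<lambda>n::nat. c * real n powr (- 1 / (d + 2)))
     in
     (\<gamma>0 < 1 \<longrightarrow> (\<forall>d1>0. let \<delta> = (\<lambda>n. d1 * h n ^ CARD('d)); T = (\<lambda>n. real n * \<delta> n) in
        (\<delta> \<longlonglongrightarrow> 0) \<longrightarrow> filterlim T at_top sequentially \<longrightarrow>
        (\<exists>C. \<forall>\<^sub>F n in sequentially. MISE M X f (\<delta> n) (h n) n \<le> ennreal (C / T n)))) \<and>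
     (\<gamma>0 = 1 \<longrightarrow> (\<forall>d2>0. let \<delta> = (\<lambda>n. d2 * h n ^ CARD('d) * ln (1 / h n ^ CARD('d))); T = (\<lambda>n. real n * \<delta> n) in
        (\<delta> \<longlonglongrightarrow> 0) \<longrightarrow> filterlim T at_top sequentially \<longrightarrow>
        (\<exists>C. \<forall>\<^sub>F n in sequentially. MISE M X f (\<delta> n) (h n) n \<le> ennreal (C * ln (T n) / T n)))) \<and>
     (1 < \<gamma>0 \<longrightarrow> (\<forall>d3>0. let \<delta> = (\<lambda>n. d3 * h n powr (d / \<gamma>0)); T = (\<lambda>n. real n * \<delta> n) in
        (\<delta> \<longlonglongrightarrow> 0) \<longrightarrow> filterlim T at_top sequentially \<longrightarrow>
        (\<exists>C. \<forall>\<^sub>F n in sequentially. MISE M X f (\<delta> n) (h n) n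
              \<le> ennreal (C * T n powr (- (2 * \<gamma>0 / (2 * \<gamma>0 + d * (\<gamma>0 - 1))))))))"
proof -
  obtain Df D2f where Dfs: "\<forall>x. (f has_derivative (\<lambda>v. \<Sum>i\<in>UNIV. Df i x * v $ i)) (at x)"
    "\<forall>i x. (Df i has_derivative (\<lambda>v. \<Sum>j\<in>UNIV. D2f i j x * v $ j)) (at x)"
    "\<forall>i. integrable lborel (\<lambda>x. (Df i x)\<^sup>2)"
    using A0_i by blast
  have Df_cont: "continuous_on UNIV (Df i)" for i
  proof -
    have "\<forall>x\<in>UNIV. isCont (Df i) x"
      using Dfs(2) by (auto intro: has_derivative_continuous)
    thus ?thesis by (rule continuous_at_imp_continuous_on)
  qed
  obtain \<phi> :: "real ^ 'd \<Rightarrow> real" where phi: "\<forall>y. 0 < \<phi> y" "continuous_on UNIV \<phi>" "integrable lborel \<phi>"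
    "\<forall>y u z. 0 < u \<longrightarrow> u \<le> u0 \<longrightarrow> fu u y z \<le> \<phi> y * u powr (- \<gamma>0)"
    using A1_i by blast
  obtain kk :: "real ^ 'd \<Rightarrow> real" and \<pi> :: "real \<Rightarrow> real" and u1 where kp:
    "\<forall>y. 0 < kk y" "continuous_on UNIV kk" "integrable lborel kk"
    "bounded (range \<pi>)" "\<exists>U. \<forall>a b. U \<le> a \<longrightarrow> a \<le> b \<longrightarrow> \<pi> b \<le> \<pi> a"
    "u0 < u1" "set_integrable lborel {u1..} \<pi>"
    "\<forall>y u z. u0 \<le> u \<longrightarrow> \<bar>fu u y z - f y * f z\<bar> \<le> kk y * \<pi> u"
    using A1_ii by blast
  obtain U where U: "\<forall>a b. U \<le> a \<longrightarrow> a \<le> b \<longrightarrow> \<pi> b \<le> \<pi> a" using kp(5) by blast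
  obtain Bp where Bp: "\<forall>x\<in>range \<pi>. norm x \<le> Bp" using kp(4) unfolding bounded_iff by blast
  have pi_int: "integrable lborel (\<lambda>s. indicator {u1..} s * \<pi> s)"
    using kp(7) by (simp add: set_integrable_def)
  interpret H: hsetting2 M X f fu \<gamma>0 u0 \<phi> kk \<pi> Df U u1 Bp
  proof (rule hsetting2.intro)
    show "hsetting M X f fu \<gamma>0 u0 \<phi> kk \<pi>"
    proof (rule hsetting.intro)
    show "prob_space M" by (rule prob)
    show "\<And>x. 0 \<le> f x" by (rule f_nonneg)
    show "\<And>t. distributed M lborel (X t) (\<lambda>x. ennreal (f x))" by (rule dens)
    show "\<And>u y z. 0 < u \<Longrightarrow> 0 \<le> fu u y z" by (rule fu_nonneg)
    show "\<And>s t. s \<noteq> t \<Longrightarrow> distributed M (lborel \<Otimes>\<^sub>M lborel) (\<lambda>\<omega>. (X s \<omega>, X t \<omega>))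
          (\<lambda>p. ennreal (fu \<bar>t - s\<bar> (fst p) (snd p)))" by (rule joint)
    show "continuous_on UNIV f" by (rule A0_ii(1))
    show "0 < u0" by (rule u0_pos)
    show "\<And>y. 0 < \<phi> y" using phi(1) by blast
    show "continuous_on UNIV \<phi>" by (rule phi(2))
    show "integrable lborel \<phi>" by (rule phi(3))
    show "\<And>y u z. 0 < u \<Longrightarrow> u \<le> u0 \<Longrightarrow> fu u y z \<le> \<phi> y * u powr (- \<gamma>0)" using phi(4) by blast
    show "\<And>y. 0 < kk y" using kp(1) by blast
    show "continuous_on UNIV kk" by (rule kp(2))
    show "integrable lborel kk" by (rule kp(3))
    show "\<And>y u z. u0 \<le> u \<Longrightarrow> \<bar>fu u y z - f y * f z\<bar> \<le> kk y * \<pi> u" using kp(8) by blast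
    qed
  next
    show "hsetting2_axioms f u0 \<pi> Df U u1 Bp"
    proof (rule hsetting2_axioms.intro)
    show "\<And>x. (f has_derivative (\<lambda>v. \<Sum>i\<in>UNIV. Df i x * v $ i)) (at x)" using Dfs(1) by blast
    show "\<And>i. continuous_on UNIV (Df i)" by (rule Df_cont)
    show "\<And>i. integrable lborel (\<lambda>x. (Df i x)\<^sup>2)" using Dfs(3) by blast
    show "\<And>u. \<bar>\<pi> u\<bar> \<le> Bp" using Bp by auto
    show "\<And>a b. U \<le> a \<Longrightarrow> a \<le> b \<Longrightarrow> \<pi> b \<le> \<pi> a" using U by blast
    show "u0 < u1" by (rule kp(6))
    show "integrable lborel (\<lambda>s. indicator {u1..} s * \<pi> s)" by (rule pi_int)
    qed
  qed
  show ?thesis unfolding Let_def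
  proof (intro conjI impI allI)
    fix d1 :: real assume g: "\<gamma>0 < 1" and d1: "0 < d1"
      and lim: "(\<lambda>n. d1 * (c * real n powr (- 1 / (real CARD('d) + 2))) ^ CARD('d)) \<longlonglongrightarrow> 0"
      and Tl: "filterlim (\<lambda>n. real n * (d1 * (c * real n powr (- 1 / (real CARD('d) + 2))) ^ CARD('d))) at_top sequentially"
    show "\<exists>C. \<forall>\<^sub>F n in sequentially. MISE M X f (d1 * (c * real n powr (- 1 / (real CARD('d) + 2))) ^ CARD('d))
            (c * real n powr (- 1 / (real CARD('d) + 2))) n
            \<le> ennreal (C / (real n * (d1 * (c * real n powr (- 1 / (real CARD('d) + 2))) ^ CARD('d))))"
      by (rule H.case1[OF g \<gamma>0_pos c_pos d1 lim])
  next
    fix d2 :: real assume g: "\<gamma>0 = 1" and d2: "0 < d2"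
      and lim: "(\<lambda>n. d2 * (c * real n powr (- 1 / (real CARD('d) + 2))) ^ CARD('d) * ln (1 / (c * real n powr (- 1 / (real CARD('d) + 2))) ^ CARD('d))) \<longlonglongrightarrow> 0"
      and Tl: "filterlim (\<lambda>n. real n * (d2 * (c * real n powr (- 1 / (real CARD('d) + 2))) ^ CARD('d) * ln (1 / (c * real n powr (- 1 / (real CARD('d) + 2))) ^ CARD('d)))) at_top sequentially"
    show "\<exists>C. \<forall>\<^sub>F n in sequentially. MISE M X f (d2 * (c * real n powr (- 1 / (real CARD('d) + 2))) ^ CARD('d) * ln (1 / (c * real n powr (- 1 / (real CARD('d) + 2))) ^ CARD('d)))
            (c * real n powr (- 1 / (real CARD('d) + 2))) n
            \<le> ennreal (C * ln (real n * (d2 * (c * real n powr (- 1 / (real CARD('d) + 2))) ^ CARD('d) * ln (1 / (c * real n powr (- 1 / (real CARD('d) + 2))) ^ CARD('d))))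
              / (real n * (d2 * (c * real n powr (- 1 / (real CARD('d) + 2))) ^ CARD('d) * ln (1 / (c * real n powr (- 1 / (real CARD('d) + 2))) ^ CARD('d)))))"
      by (rule H.case2[OF g c_pos d2 lim Tl])
  next
    fix d3 :: real assume g: "1 < \<gamma>0" and d3: "0 < d3"
      and lim: "(\<lambda>n. d3 * (c * real n powr (- 1 / (real CARD('d) + 2))) powr (real CARD('d) / \<gamma>0)) \<longlonglongrightarrow> 0"
      and Tl: "filterlim (\<lambda>n. real n * (d3 * (c * real n powr (- 1 / (real CARD('d) + 2))) powr (real CARD('d) / \<gamma>0))) at_top sequentially"
    show "\<exists>C. \<forall>\<^sub>F n in sequentially. MISE M X f (d3 * (c * real n powr (- 1 / (real CARD('d) + 2))) powr (real CARD('d) / \<gamma>0))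
            (c * real n powr (- 1 / (real CARD('d) + 2))) n
            \<le> ennreal (C * (real n * (d3 * (c * real n powr (- 1 / (real CARD('d) + 2))) powr (real CARD('d) / \<gamma>0))) powr
               (- (2 * \<gamma>0 / (2 * \<gamma>0 + real CARD('d) * (\<gamma>0 - 1)))))"
      by (rule H.case3[OF g c_pos d3 lim Tl])
  qed
qed

end
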